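(* Let $\varphi(z,x,y)$ and $\psi(z,x,y)$ both satisfy Conditions (C1)–(C5) described in the context. Then each of the following functions also satisfies Conditions (C1)–(C5): (i) $\theta(z,x,y)=\varphi(z,x,y)+\psi(z,x,y)$; (ii) $\theta(z,x,y)=\varphi(z,x,y)b(x,y)$, where $b\in L_\infty(\Omega\times\Omega)$ and $0<c_5<b(x,y)<c_6$ for constants $c_5,c_6$; (iii) $\theta(z,x,y)=\varphi(z,x,y)\psi(z,x,y)$; (iv) $\theta(z,x,y)=\varphi(\psi(z,x,y),x,y)$.
   Context: Let $\Omega\subseteq\mathbb R^d$ be a domain; functions in $L_{1,loc}(\Omega)$ are complex-valued. A real function $r$ on $[0,\infty)$ is almost increasing (resp. almost decreasing) with constant $\beta\ge1$ if $r(s)\le\beta r(t)$ (resp. $\beta r(s)\ge r(t)$) for all $0\le s\le t$. For a function $\theta:[0,\infty)\times\Omega\times\Omega\to[0,\infty)$, the conditions are: (C1) for each $u\in L_{1,loc}(\Omega)$ the function $(x,y)\mapsto\theta(|u(x)-u(y)|,x,y)$ is measurable on $\Omega\times\Omega$; (C2) for every $\varepsilon>0$ there is $\delta\in(0,1)$ such that $\theta(\frac{s+t}{2},x,y)\le(1-\delta)\frac{\theta(s,x,y)+\theta(t,x,y)}{2}$ for a.e. $(x,y)$ and all $s,t>0$ with $|s-t|\ge\varepsilon\max\{s,t\}$; (C3) there are constants $1<p_-\le p_+$ and $\beta\ge1$ such that for a.e. $(x,y)$ the function $t\mapsto\theta(t,x,y)/t^{p_-}$ is almost increasing with constant $\beta$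 and $t\mapsto\theta(t,x,y)/t^{p_+}$ is almost decreasing with constant $\beta$; (C4) for a.e. $(x,y)$: $c_1^{-1}\le\theta(1,x,y)\le c_1$ with some constant $c_1>0$, $\theta(0,x,y)=0$, and $\theta(t,x,y)>0$ for $t>0$; (C5) for a.e. $(x,y)$, $\theta(t,x,y)$ is differentiable in $t>0$ and $0<t\theta'(t,x,y)\le c_2\theta(t,x,y)$ for $t>0$, with some constant $c_2>1$ independent of $t,x,y$. The constants in the conditions may differ between functions. *)

theory Defs
  imports "HOL-Analysis.Analysis"
begin

definition L1_loc :: "'a::euclidean_space set \<Rightarrow> ('a \<Rightarrow> complex) \<Rightarrow> bool" where
  "L1_loc \<Omega> u \<longleftrightarrow> u \<in> borel_measurable (lebesgue_on \<Omega>) \<and>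
     (\<forall>K. compact K \<longrightarrow> K \<subseteq> \<Omega> \<longrightarrow> integrable (lebesgue_on K) u)"

text \<open>Almost increasing / almost decreasing with constant \<beta>, on the open half-line
  (the quotients t \<mapsto> \<theta>(t)/t^p are only meaningful for t > 0).\<close>
definition almost_increasing :: "(real \<Rightarrow> real) \<Rightarrow> real \<Rightarrow> bool" where
  "almost_increasing r \<beta> \<longleftrightarrow> (\<forall>s t. 0 < s \<longrightarrow> s \<le> t \<longrightarrow> r s \<le> \<beta> * r t)"

definition almost_decreasing :: "(real \<Rightarrow> real) \<Rightarrow> real \<Rightarrow> bool" where
  "almost_decreasing r \<beta> \<longleftrightarrow> (\<forall>s t. 0 < s \<longrightarrow> s \<le> t \<longrightarrow> \<beta> * r s \<ge> r t)"

definition nonneg_on :: "'a set \<Rightarrow> (real \<Rightarrow> 'a \<Rightarrow> 'a \<Rightarrow> real) \<Rightarrow> bool" where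
  "nonneg_on \<Omega> \<theta> \<longleftrightarrow> (\<forall>t\<ge>0. \<forall>x\<in>\<Omega>. \<forall>y\<in>\<Omega>. 0 \<le> \<theta> t x y)"

definition C1 :: "'a::euclidean_space set \<Rightarrow> (real \<Rightarrow> 'a \<Rightarrow> 'a \<Rightarrow> real) \<Rightarrow> bool" where
  "C1 \<Omega> \<theta> \<longleftrightarrow> (\<forall>u. L1_loc \<Omega> u \<longrightarrow>
     (\<lambda>(x, y). \<theta> (cmod (u x - u y)) x y) \<in> borel_measurable (lebesgue_on (\<Omega> \<times> \<Omega>)))"

definition C2 :: "'a::euclidean_space set \<Rightarrow> (real \<Rightarrow> 'a \<Rightarrow> 'a \<Rightarrow> real) \<Rightarrow> bool" where
  "C2 \<Omega> \<theta> \<longleftrightarrow> (\<forall>\<epsilon>>0. \<exists>\<delta>. 0 < \<delta> \<and> \<delta> < 1 \<and>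
     (AE p in lebesgue_on (\<Omega> \<times> \<Omega>). \<forall>s t. 0 < s \<longrightarrow> 0 < t \<longrightarrow> \<bar>s - t\<bar> \<ge> \<epsilon> * max s t \<longrightarrow>
        \<theta> ((s + t) / 2) (fst p) (snd p) \<le> (1 - \<delta>) * ((\<theta> s (fst p) (snd p) + \<theta> t (fst p) (snd p)) / 2)))"

definition C3 :: "'a::euclidean_space set \<Rightarrow> (real \<Rightarrow> 'a \<Rightarrow> 'a \<Rightarrow> real) \<Rightarrow> bool" where
  "C3 \<Omega> \<theta> \<longleftrightarrow> (\<exists>pm pp \<beta>. 1 < pm \<and> pm \<le> pp \<and> 1 \<le> \<beta> \<and>
     (AE p in lebesgue_on (\<Omega> \<times> \<Omega>).
        almost_increasing (\<lambda>t. \<theta> t (fst p) (snd p) / t powr pm) \<beta> \<and>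
        almost_decreasing (\<lambda>t. \<theta> t (fst p) (snd p) / t powr pp) \<beta>))"

definition C4 :: "'a::euclidean_space set \<Rightarrow> (real \<Rightarrow> 'a \<Rightarrow> 'a \<Rightarrow> real) \<Rightarrow> bool" where
  "C4 \<Omega> \<theta> \<longleftrightarrow> (\<exists>c1>0. AE p in lebesgue_on (\<Omega> \<times> \<Omega>).
     inverse c1 \<le> \<theta> 1 (fst p) (snd p) \<and> \<theta> 1 (fst p) (snd p) \<le> c1 \<and>
     \<theta> 0 (fst p) (snd p) = 0 \<and> (\<forall>t>0. 0 < \<theta> t (fst p) (snd p)))"

definition C5 :: "'a::euclidean_space set \<Rightarrow> (real \<Rightarrow> 'a \<Rightarrow> 'a \<Rightarrow> real) \<Rightarrow> bool" where
  "C5 \<Omega> \<theta> \<longleftrightarrow> (\<exists>c2>1. AE p in lebesgue_on (\<Omega> \<times> \<Omega>).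
     \<forall>t>0. \<exists>D. ((\<lambda>z. \<theta> z (fst p) (snd p)) has_real_derivative D) (at t) \<and>
        0 < t * D \<and> t * D \<le> c2 * \<theta> t (fst p) (snd p))"

definition conditions_C :: "'a::euclidean_space set \<Rightarrow> (real \<Rightarrow> 'a \<Rightarrow> 'a \<Rightarrow> real) \<Rightarrow> bool" where
  "conditions_C \<Omega> \<theta> \<longleftrightarrow> nonneg_on \<Omega> \<theta> \<and> C1 \<Omega> \<theta> \<and> C2 \<Omega> \<theta> \<and> C3 \<Omega> \<theta> \<and> C4 \<Omega> \<theta> \<and> C5 \<Omega> \<theta>"

end

theory Submission
  imports Defs
begin

lemma deriv_mono:
  fixes f :: "real \<Rightarrow> real"
  assumes d: "\<forall>t>0. \<exists>D. (f has_real_derivative D) (at t) \<and> 0 < t * D"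
    and s: "0 < s" "s \<le> t"
  shows "f s \<le> f t"
proof (cases "s = t")
  case False
  then have "s < t" using s by auto
  have "f s < f t"
  proof (rule DERIV_pos_imp_increasing[OF \<open>s < t\<close>])
    fix x assume "s \<le> x" "x \<le> t"
    then have "x > 0" using s by auto
    then obtain D where "(f has_real_derivative D) (at x)" "0 < x * D" using d by auto
    moreover have "D > 0" using \<open>0 < x * D\<close> \<open>x > 0\<close> by (simp add: zero_less_mult_iff)
    ultimately show "\<exists>y. DERIV f x :> y \<and> y > 0" by blast
  qed
  then show ?thesis by simp
qed simp

lemma deriv_growth:
  fixes f :: "real \<Rightarrow> real"
  assumes d: "\<forall>t>0. \<exists>D. (f has_real_derivative D) (at t) \<and> t * D \<le> c * f t"
    and pos: "\<forall>t>0. 0 < f t"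
    and s: "0 < a" "a \<le> b"
  shows "f b * a powr c \<le> f a * b powr c"
proof -
  define g where "g t = ln (f t) - c * ln t" for t
  have dg: "\<exists>y. DERIV g x :> y \<and> y \<le> 0" if "x > 0" for x
  proof -
    obtain D where D: "(f has_real_derivative D) (at x)" "x * D \<le> c * f x" using d \<open>x>0\<close> by auto
    have fx: "f x > 0" using pos \<open>x > 0\<close> by auto
    have "DERIV g x :> D / f x - c / x"
      unfolding g_def[abs_def]
      by (rule derivative_eq_intros refl D fx \<open>x>0\<close> | simp add: fx \<open>x>0\<close>)+
    moreover have "D / f x - c / x \<le> 0"
    proof -
      have "D / f x - c / x = (x * D - c * f x) / (x * f x)" using fx \<open>x>0\<close> by (simp add: field_simps)
      also have "\<dots> \<le> 0" using D(2) fx \<open>x>0\<close> by (intro divide_nonpos_pos) auto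
      finally show ?thesis .
    qed
    ultimately show ?thesis by blast
  qed
  have "g b \<le> g a"
  proof (rule DERIV_nonpos_imp_decreasing_open[OF s(2)])
    fix x assume "a < x" "x < b" then show "\<exists>y. DERIV g x :> y \<and> y \<le> 0" using dg s by auto
  next
    show "continuous_on {a..b} g"
      by (rule continuous_at_imp_continuous_on, rule ballI, metis DERIV_isCont dg s(1) atLeastAtMost_iff less_le_trans)
  qed
  then have "ln (f b) + c * ln a \<le> ln (f a) + c * ln b" unfolding g_def by simp
  then have "exp (ln (f b) + c * ln a) \<le> exp (ln (f a) + c * ln b)" by simp
  then show ?thesis using pos s by (simp add: exp_add powr_def mult.commute)
qed

lemma comp_C2_pt_le:
  fixes f :: "real \<Rightarrow> real"
  assumes mono: "\<forall>s t. 0<s \<longrightarrow> s\<le>t \<longrightarrow> f s \<le> f t"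
    and pos: "\<forall>t>0. f t > 0"
    and growth: "\<forall>a b. 0<a \<longrightarrow> a\<le>b \<longrightarrow> f b * a powr c \<le> f a * b powr c"
    and c: "c > 0"
    and C2eta: "\<forall>s t. 0<s \<longrightarrow> 0<t \<longrightarrow> \<bar>s-t\<bar> \<ge> \<eta> * max s t \<longrightarrow> f ((s+t)/2) \<le> (1-\<delta>1)*((f s+f t)/2)"
    and C2lam: "\<forall>s t. 0<s \<longrightarrow> 0<t \<longrightarrow> \<bar>s-t\<bar> \<ge> (2*(1-lm)) * max s t \<longrightarrow> f ((s+t)/2) \<le> (1-\<delta>2)*((f s+f t)/2)"
    and lam: "3/4 \<le> lm" "lm < 1"
    and eta: "\<eta> = 1 - (1-\<delta>2) powr (1/c)"
    and d: "0<\<delta>1" "\<delta>1<1" "0<\<delta>2" "\<delta>2<1"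
    and ab: "0<a" "a \<le> b" and v: "0 < v" "v \<le> (a+b)/2" "v \<le> lm * b"
  shows "f v \<le> (1 - min \<delta>1 (\<delta>2/2)) * ((f a + f b)/2)"
proof -
  have fa: "f a > 0" and fb: "f b > 0" using pos ab by auto
  show ?thesis
  proof (cases "\<bar>a-b\<bar> \<ge> \<eta> * max a b")
    case True
    have "f v \<le> f ((a+b)/2)" using mono v by auto
    also have "\<dots> \<le> (1-\<delta>1)*((f a+f b)/2)" using C2eta True ab by auto
    also have "\<dots> \<le> (1 - min \<delta>1 (\<delta>2/2)) * ((f a + f b)/2)"
      using fa fb by (intro mult_right_mono) auto
    finally show ?thesis .
  next
    case False
    then have "b - a < \<eta> * b" using ab by auto
    then have ab1: "a/b \<ge> 1 - \<eta>" using ab by (simp add: field_simps)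
    have e1: "(1-\<delta>2) powr (1/c) > 0" using d by auto
    have "f v \<le> f (lm * b)" using mono v by auto
    also have "\<dots> = f (((2*lm-1)*b + b)/2)" by (simp add: field_simps)
    also have "\<dots> \<le> (1-\<delta>2)*((f ((2*lm-1)*b) + f b)/2)"
      using C2lam[rule_format, of "(2*lm-1)*b" b] lam ab
      by (auto simp: abs_if max_def field_simps mult_le_cancel_right)
    also have "\<dots> \<le> (1-\<delta>2)*((f b + f b)/2)"
      using mono[rule_format, of "(2*lm-1)*b" b] lam ab d
      by (intro mult_left_mono) (auto simp: mult_le_cancel_right1)
    finally have fv: "f v \<le> (1-\<delta>2) * f b" by simp
    have "(1-\<delta>2) = ((1-\<delta>2) powr (1/c)) powr c"
      using c d by (simp add: powr_powr)
    also have "\<dots> = (1-\<eta>) powr c" using eta by simp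
    also have "\<dots> \<le> (a/b) powr c" using ab1 e1 eta c by (intro powr_mono2) auto
    finally have "1-\<delta>2 \<le> (a/b) powr c" .
    also have "(a/b) powr c = a powr c / b powr c" using ab by (simp add: powr_divide)
    finally have "(1-\<delta>2) * b powr c \<le> a powr c" using ab by (simp add: field_simps)
    then have "f b * ((1-\<delta>2) * b powr c) \<le> f b * a powr c"
      using fb by (intro mult_left_mono) auto
    then have "f b * (1-\<delta>2) * b powr c \<le> f b * a powr c" by (simp add: mult.assoc)
    also have "\<dots> \<le> f a * b powr c" using growth ab by auto
    finally have "f b * (1-\<delta>2) \<le> f a" using ab by (simp add: mult_le_cancel_right)
    then have "(f a + f b)/2 \<ge> f b * (1 - \<delta>2/2)" by (simp add: algebra_simps)
    moreover have "1 - min \<delta>1 (\<delta>2/2) \<ge> 1 - \<delta>2/2" by simp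
    ultimately have "(1 - min \<delta>1 (\<delta>2/2)) * ((f a + f b)/2) \<ge> (1 - \<delta>2/2) * (f b * (1 - \<delta>2/2))"
      using d fb by (intro mult_mono) auto
    moreover have "(1 - \<delta>2/2) * (f b * (1 - \<delta>2/2)) \<ge> (1-\<delta>2) * f b"
    proof -
      have "(1 - \<delta>2/2) * (f b * (1 - \<delta>2/2)) = f b * ((1-\<delta>2) + \<delta>2^2/4)" by (simp add: power2_eq_square field_simps)
      also have "\<dots> \<ge> f b * (1-\<delta>2)" using fb by (intro mult_left_mono) auto
      finally show ?thesis by (simp add: mult.commute)
    qed
    ultimately show ?thesis using fv by linarith
  qed
qed

lemma comp_C2_pt:
  fixes f :: "real \<Rightarrow> real"
  assumes mono: "\<forall>s t. 0<s \<longrightarrow> s\<le>t \<longrightarrow> f s \<le> f t"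
    and pos: "\<forall>t>0. f t > 0"
    and growth: "\<forall>a b. 0<a \<longrightarrow> a\<le>b \<longrightarrow> f b * a powr c \<le> f a * b powr c"
    and c: "c > 0"
    and C2eta: "\<forall>s t. 0<s \<longrightarrow> 0<t \<longrightarrow> \<bar>s-t\<bar> \<ge> \<eta> * max s t \<longrightarrow> f ((s+t)/2) \<le> (1-\<delta>1)*((f s+f t)/2)"
    and C2lam: "\<forall>s t. 0<s \<longrightarrow> 0<t \<longrightarrow> \<bar>s-t\<bar> \<ge> (2*(1-lm)) * max s t \<longrightarrow> f ((s+t)/2) \<le> (1-\<delta>2)*((f s+f t)/2)"
    and lam: "3/4 \<le> lm" "lm < 1"
    and eta: "\<eta> = 1 - (1-\<delta>2) powr (1/c)"
    and d: "0<\<delta>1" "\<delta>1<1" "0<\<delta>2" "\<delta>2<1"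
    and ab: "0<a" "0<b" and v: "0 < v" "v \<le> (a+b)/2" "v \<le> lm * max a b"
  shows "f v \<le> (1 - min \<delta>1 (\<delta>2/2)) * ((f a + f b)/2)"
proof (cases "a \<le> b")
  case True
  have "v \<le> lm * b" using v(3) True by (simp add: max_def)
  then show ?thesis by (rule comp_C2_pt_le[OF assms(1-13) ab(1) True v(1,2)])
next
  case False
  have "v \<le> lm * a" using v(3) False by (simp add: max_def)
  moreover have "v \<le> (b+a)/2" using v(2) by simp
  ultimately have "f v \<le> (1 - min \<delta>1 (\<delta>2/2)) * ((f b + f a)/2)"
    using comp_C2_pt_le[OF assms(1-13) ab(2), of a] v(1) False by simp
  then show ?thesis by (simp add: add.commute)
qed

lemma prod_C2_pt:
  fixes f g :: "real \<Rightarrow> real"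
  assumes monof: "\<forall>s t. 0<s \<longrightarrow> s\<le>t \<longrightarrow> f s \<le> f t"
    and monog: "\<forall>s t. 0<s \<longrightarrow> s\<le>t \<longrightarrow> g s \<le> g t"
    and posf: "\<forall>t>0. f t > 0" and posg: "\<forall>t>0. g t > 0"
    and st: "0 < s" "0 < t"
    and hf: "f ((s+t)/2) \<le> (1-\<delta>1)*((f s+f t)/2)"
    and hg: "g ((s+t)/2) \<le> (1-\<delta>2)*((g s+g t)/2)"
    and d: "0 \<le> \<delta>2" "\<delta>1 < 1" "\<delta>2 < 1"
  shows "f ((s+t)/2) * g ((s+t)/2) \<le> (1-\<delta>1)*((f s * g s + f t * g t)/2)"
proof -
  have m: "(s+t)/2 > 0" using st by auto
  have cheb: "0 \<le> (f s - f t) * (g s - g t)"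
  proof (cases "s \<le> t")
    case True
    then show ?thesis using monof monog st by (intro mult_nonpos_nonpos) auto
  next
    case False
    then show ?thesis using monof monog st by (intro mult_nonneg_nonneg) auto
  qed
  have A: "((f s+f t)/2) * ((g s+g t)/2) \<le> (f s * g s + f t * g t)/2"
    using cheb by (simp add: algebra_simps)
  have "f ((s+t)/2) * g ((s+t)/2) \<le> ((1-\<delta>1)*((f s+f t)/2)) * ((1-\<delta>2)*((g s+g t)/2))"
  proof (rule mult_mono[OF hf hg])
    show "0 \<le> (1-\<delta>1)*((f s+f t)/2)" using posf st d by (intro mult_nonneg_nonneg) (auto intro: less_imp_le add_nonneg_nonneg)
    show "0 \<le> g ((s+t)/2)" using posg m by (auto intro: less_imp_le)
  qed
  also have "\<dots> = (1-\<delta>1) * ((1-\<delta>2) * (((f s+f t)/2) * ((g s+g t)/2)))" by (simp add: algebra_simps)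
  also have "\<dots> \<le> (1-\<delta>1) * ((f s * g s + f t * g t)/2)"
  proof (rule mult_left_mono)
    have P: "0 \<le> ((f s+f t)/2) * ((g s+g t)/2)"
      using posf posg st by (intro mult_nonneg_nonneg) (auto intro: less_imp_le add_nonneg_nonneg)
    have "(1-\<delta>2) * (((f s+f t)/2) * ((g s+g t)/2)) \<le> 1 * (((f s+f t)/2) * ((g s+g t)/2))"
      by (rule mult_right_mono[OF _ P]) (use d in simp)
    then show "(1-\<delta>2) * (((f s+f t)/2) * ((g s+g t)/2)) \<le> (f s * g s + f t * g t)/2" using A by linarith
    show "0 \<le> 1 - \<delta>1" using d by simp
  qed
  finally show ?thesis .
qed

lemma ai_exp:
  assumes "almost_increasing (\<lambda>t. f t / t powr p) \<beta>" "q \<le> p" "\<forall>t>0. 0 \<le> f t" "0 \<le> \<beta>"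
  shows "almost_increasing (\<lambda>t. f t / t powr q) \<beta>"
  unfolding almost_increasing_def
proof (intro allI impI)
  fix s t :: real assume st: "0 < s" "s \<le> t"
  have h: "f s / s powr p \<le> \<beta> * (f t / t powr p)" using assms(1) st unfolding almost_increasing_def by auto
  have e1: "f s / s powr q = (f s / s powr p) * s powr (p - q)" using st by (simp add: powr_diff)
  have e2: "f t / t powr q = (f t / t powr p) * t powr (p - q)" using st by (simp add: powr_diff)
  have "(f s / s powr p) * s powr (p - q) \<le> (\<beta> * (f t / t powr p)) * s powr (p - q)"
    by (rule mult_right_mono[OF h]) simp
  also have "\<dots> \<le> (\<beta> * (f t / t powr p)) * t powr (p - q)"
    using assms st by (intro mult_left_mono powr_mono2) auto
  finally show "f s / s powr q \<le> \<beta> * (f t / t powr q)" using e1 e2 by simp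
qed

lemma ad_exp:
  assumes "almost_decreasing (\<lambda>t. f t / t powr p) \<beta>" "p \<le> q" "\<forall>t>0. 0 \<le> f t" "0 \<le> \<beta>"
  shows "almost_decreasing (\<lambda>t. f t / t powr q) \<beta>"
  unfolding almost_decreasing_def
proof (intro allI impI)
  fix s t :: real assume st: "0 < s" "s \<le> t"
  have h: "f t / t powr p \<le> \<beta> * (f s / s powr p)" using assms(1) st unfolding almost_decreasing_def by auto
  have e1: "f s / s powr q = (f s / s powr p) / s powr (q - p)" using st by (simp add: powr_diff)
  have e2: "f t / t powr q = (f t / t powr p) / t powr (q - p)" using st by (simp add: powr_diff)
  have "(f t / t powr p) / t powr (q - p) \<le> (\<beta> * (f s / s powr p)) / t powr (q - p)"
    by (rule divide_right_mono[OF h]) simp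
  also have "\<dots> \<le> (\<beta> * (f s / s powr p)) / s powr (q - p)"
    using assms st by (intro divide_left_mono powr_mono2 mult_pos_pos) auto
  finally have "(f t / t powr p) / t powr (q - p) \<le> (\<beta> * (f s / s powr p)) / s powr (q - p)" .
  then show "\<beta> * (f s / s powr q) \<ge> f t / t powr q" by (simp only: e1 e2 times_divide_eq_right)
qed

lemma ai_add:
  assumes "almost_increasing F b1" "almost_increasing G b2" "\<forall>t>0. 0 \<le> F t" "\<forall>t>0. 0 \<le> G t"
  shows "almost_increasing (\<lambda>t. F t + G t) (max b1 b2)"
  unfolding almost_increasing_def
proof (intro allI impI)
  fix s t :: real assume st: "0 < s" "s \<le> t"
  have "F s \<le> b1 * F t" "G s \<le> b2 * G t" using assms st unfolding almost_increasing_def by auto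
  moreover have "b1 * F t \<le> max b1 b2 * F t" "b2 * G t \<le> max b1 b2 * G t"
    using assms st by (auto intro!: mult_right_mono[OF max.cobounded1] mult_right_mono[OF max.cobounded2])
  ultimately show "F s + G s \<le> max b1 b2 * (F t + G t)" by (simp add: distrib_left)
qed

lemma ad_add:
  assumes "almost_decreasing F b1" "almost_decreasing G b2" "\<forall>t>0. 0 \<le> F t" "\<forall>t>0. 0 \<le> G t"
  shows "almost_decreasing (\<lambda>t. F t + G t) (max b1 b2)"
  unfolding almost_decreasing_def
proof (intro allI impI)
  fix s t :: real assume st: "0 < s" "s \<le> t"
  have "F t \<le> b1 * F s" "G t \<le> b2 * G s" using assms st unfolding almost_decreasing_def by auto
  moreover have "b1 * F s \<le> max b1 b2 * F s" "b2 * G s \<le> max b1 b2 * G s"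
    using assms st by (auto intro!: mult_right_mono[OF max.cobounded1] mult_right_mono[OF max.cobounded2])
  ultimately show "max b1 b2 * (F s + G s) \<ge> F t + G t" by (simp add: distrib_left)
qed

lemma ai_mult:
  assumes "almost_increasing F b1" "almost_increasing G b2" "\<forall>t>0. 0 \<le> F t" "\<forall>t>0. 0 \<le> G t" "0 \<le> b1"
  shows "almost_increasing (\<lambda>t. F t * G t) (b1 * b2)"
  unfolding almost_increasing_def
proof (intro allI impI)
  fix s t :: real assume st: "0 < s" "s \<le> t"
  have "F s \<le> b1 * F t" "G s \<le> b2 * G t" using assms st unfolding almost_increasing_def by auto
  moreover have "0 \<le> b1 * F t" "0 \<le> G s" using assms st by auto
  ultimately have "F s * G s \<le> (b1 * F t) * (b2 * G t)" by (intro mult_mono)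
  then show "F s * G s \<le> b1 * b2 * (F t * G t)" by (simp add: ac_simps)
qed

lemma ad_mult:
  assumes "almost_decreasing F b1" "almost_decreasing G b2" "\<forall>t>0. 0 \<le> F t" "\<forall>t>0. 0 \<le> G t" "0 \<le> b1"
  shows "almost_decreasing (\<lambda>t. F t * G t) (b1 * b2)"
  unfolding almost_decreasing_def
proof (intro allI impI)
  fix s t :: real assume st: "0 < s" "s \<le> t"
  have "F t \<le> b1 * F s" "G t \<le> b2 * G s" using assms st unfolding almost_decreasing_def by auto
  moreover have "0 \<le> b1 * F s" "0 \<le> G t" using assms st by auto
  ultimately have "F t * G t \<le> (b1 * F s) * (b2 * G s)" by (intro mult_mono)
  then show "b1 * b2 * (F s * G s) \<ge> F t * G t" by (simp add: ac_simps)
qed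

lemma comp_ident:
  fixes u s P q F :: real
  assumes "0 < u" "0 < s"
  shows "(F / u powr P) * (u / s powr q) powr P = F / s powr (q * P)"
  using assms by (simp add: powr_divide powr_powr)

lemma ai_comp:
  fixes f g :: "real \<Rightarrow> real"
  assumes f: "almost_increasing (\<lambda>t. f t / t powr P) bf"
    and g: "almost_increasing (\<lambda>t. g t / t powr q) bg"
    and gmono: "\<forall>s t. 0<s \<longrightarrow> s\<le>t \<longrightarrow> g s \<le> g t" and gpos: "\<forall>t>0. 0 < g t"
    and fnn: "\<forall>t>0. 0 \<le> f t" and P: "0 \<le> P" and bf: "0 \<le> bf"
  shows "almost_increasing (\<lambda>t. f (g t) / t powr (q * P)) (bf * bg powr P)"
  unfolding almost_increasing_def
proof (intro allI impI)
  fix s t :: real assume st: "0 < s" "s \<le> t"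
  define u w where "u = g s" and "w = g t"
  have u: "0 < u" "u \<le> w" using gpos gmono st unfolding u_def w_def by auto
  have t: "0 < t" using st by auto
  have h1: "f u / u powr P \<le> bf * (f w / w powr P)" using f u unfolding almost_increasing_def by auto
  have h2: "u / s powr q \<le> bg * (w / t powr q)" using g st unfolding almost_increasing_def u_def w_def by auto
  have "0 < u / s powr q" "0 < w / t powr q" using u st t by auto
  then have B: "0 < bg * (w / t powr q)" using h2 by linarith
  have "0 < bg" by (rule zero_less_mult_pos2[OF B \<open>0 < w / t powr q\<close>])
  then have bg: "0 \<le> bg" by simp
  have h3: "(u / s powr q) powr P \<le> (bg * (w / t powr q)) powr P"
    using h2 u st P by (intro powr_mono2) auto
  also have "\<dots> = bg powr P * (w / t powr q) powr P" using bg u t by (intro powr_mult)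
  finally have h3: "(u / s powr q) powr P \<le> bg powr P * (w / t powr q) powr P" .
  have "f u / s powr (q * P) = (f u / u powr P) * (u / s powr q) powr P"
    using comp_ident u st by simp
  also have "\<dots> \<le> (bf * (f w / w powr P)) * (bg powr P * (w / t powr q) powr P)"
  proof (rule mult_mono[OF h1 h3])
    have "0 \<le> f w / w powr P" using fnn u by auto
    then show "0 \<le> bf * (f w / w powr P)" by (rule mult_nonneg_nonneg[OF bf])
  qed simp
  also have "\<dots> = bf * bg powr P * ((f w / w powr P) * (w / t powr q) powr P)" by (simp add: ac_simps)
  also have "\<dots> = bf * bg powr P * (f w / t powr (q * P))" using comp_ident u t by simp
  finally show "f (g s) / s powr (q * P) \<le> bf * bg powr P * (f (g t) / t powr (q * P))"
    unfolding u_def w_def .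
qed

lemma ad_comp:
  fixes f g :: "real \<Rightarrow> real"
  assumes f: "almost_decreasing (\<lambda>t. f t / t powr P) bf"
    and g: "almost_decreasing (\<lambda>t. g t / t powr q) bg"
    and gmono: "\<forall>s t. 0<s \<longrightarrow> s\<le>t \<longrightarrow> g s \<le> g t" and gpos: "\<forall>t>0. 0 < g t"
    and fnn: "\<forall>t>0. 0 \<le> f t" and P: "0 \<le> P" and bf: "0 \<le> bf"
  shows "almost_decreasing (\<lambda>t. f (g t) / t powr (q * P)) (bf * bg powr P)"
  unfolding almost_decreasing_def
proof (intro allI impI)
  fix s t :: real assume st: "0 < s" "s \<le> t"
  define u w where "u = g s" and "w = g t"
  have u: "0 < u" "u \<le> w" using gpos gmono st unfolding u_def w_def by auto
  have t: "0 < t" using st by auto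
  have w: "0 < w" using u by auto
  have h1: "f w / w powr P \<le> bf * (f u / u powr P)" using f u unfolding almost_decreasing_def by auto
  have h2: "w / t powr q \<le> bg * (u / s powr q)" using g st unfolding almost_decreasing_def u_def w_def by auto
  have "0 < w / t powr q" "0 < u / s powr q" using u st t by auto
  then have B: "0 < bg * (u / s powr q)" using h2 by linarith
  have "0 < bg" by (rule zero_less_mult_pos2[OF B \<open>0 < u / s powr q\<close>])
  then have bg: "0 \<le> bg" by simp
  have h3: "(w / t powr q) powr P \<le> (bg * (u / s powr q)) powr P"
    using h2 w t P by (intro powr_mono2) auto
  also have "\<dots> = bg powr P * (u / s powr q) powr P" using bg u st by (intro powr_mult)
  finally have h3: "(w / t powr q) powr P \<le> bg powr P * (u / s powr q) powr P" .
  have "f w / t powr (q * P) = (f w / w powr P) * (w / t powr q) powr P"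
    using comp_ident w t by simp
  also have "\<dots> \<le> (bf * (f u / u powr P)) * (bg powr P * (u / s powr q) powr P)"
  proof (rule mult_mono[OF h1 h3])
    have "0 \<le> f u / u powr P" using fnn u by auto
    then show "0 \<le> bf * (f u / u powr P)" by (rule mult_nonneg_nonneg[OF bf])
  qed simp
  also have "\<dots> = bf * bg powr P * ((f u / u powr P) * (u / s powr q) powr P)" by (simp add: ac_simps)
  also have "\<dots> = bf * bg powr P * (f u / s powr (q * P))" using comp_ident u st by simp
  finally show "bf * bg powr P * (f (g s) / s powr (q * P)) \<ge> f (g t) / t powr (q * P)"
    unfolding u_def w_def .
qed

lemma meas_spike:
  fixes f g :: "'b::euclidean_space \<Rightarrow> real"
  assumes "S \<in> sets lebesgue" "f \<in> borel_measurable (lebesgue_on S)" "negligible N"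
    "\<And>x. x \<in> S - N \<Longrightarrow> g x = f x"
  shows "g \<in> borel_measurable (lebesgue_on S)"
proof -
  have "f measurable_on S" using assms measurable_on_iff_borel_measurable by blast
  then have "g measurable_on S" using measurable_on_spike assms by blast
  then show ?thesis using assms measurable_on_iff_borel_measurable by blast
qed

lemma AE_lebesgue_on_neg:
  assumes "S \<in> sets lebesgue" "AE x in lebesgue_on S. P x"
  obtains N where "negligible N" "N \<in> sets lebesgue" "\<And>x. x \<in> S - N \<Longrightarrow> P x"
proof -
  have "AE x in lebesgue. x \<in> S \<longrightarrow> P x" using assms AE_restrict_space_iff[of S lebesgue P] by simp
  then obtain N where N: "{x \<in> space lebesgue. \<not> (x \<in> S \<longrightarrow> P x)} \<subseteq> N" "emeasure lebesgue N = 0" "N \<in> sets lebesgue"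
    by (rule AE_E)
  have "N \<in> null_sets lebesgue" by (rule null_setsI[OF N(2,3)])
  then have "negligible N" using negligible_iff_null_sets by blast
  then show ?thesis using that N by auto
qed

lemma dyadic_tendsto:
  fixes x :: real
  shows "(\<lambda>n. real_of_int (floor (x * 2^n)) / 2^n) \<longlonglongrightarrow> x"
proof (rule real_tendsto_sandwich[where f="\<lambda>n. x - (1/2)^n" and h="\<lambda>n. x"])
  show "\<forall>\<^sub>F n in sequentially. x - (1/2)^n \<le> real_of_int (floor (x * 2^n)) / 2^n"
  proof (intro always_eventually allI)
    fix n :: nat
    have "x * 2^n - 1 \<le> real_of_int (floor (x * 2^n))" by linarith
    then have "(x * 2^n - 1) / 2^n \<le> real_of_int (floor (x * 2^n)) / 2^n" by (intro divide_right_mono) auto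
    then show "x - (1/2)^n \<le> real_of_int (floor (x * 2^n)) / 2^n" by (simp add: field_simps power_divide)
  qed
  show "\<forall>\<^sub>F n in sequentially. real_of_int (floor (x * 2^n)) / 2^n \<le> x"
  proof (intro always_eventually allI)
    fix n :: nat
    have "real_of_int (floor (x * 2^n)) \<le> x * 2^n" by linarith
    then show "real_of_int (floor (x * 2^n)) / 2^n \<le> x" by (simp add: field_simps)
  qed
  show "(\<lambda>n. x - (1/2)^n) \<longlonglongrightarrow> x"
    using tendsto_diff[OF tendsto_const LIMSEQ_realpow_zero[of "1/2::real"]] by simp
qed simp

lemma carath:
  fixes F :: "real \<Rightarrow> 'b::euclidean_space \<Rightarrow> real" and h :: "'b \<Rightarrow> real"
  assumes S: "S \<in> sets lebesgue"
    and Fm: "\<And>t. 0 \<le> t \<Longrightarrow> (\<lambda>p. F t p) \<in> borel_measurable (lebesgue_on S)"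
    and hm: "h \<in> borel_measurable (lebesgue_on S)"
    and ae: "AE p in lebesgue_on S. 0 \<le> h p \<and> (0 < h p \<longrightarrow> isCont (\<lambda>t. F t p) (h p))"
  shows "(\<lambda>p. F (h p) p) \<in> borel_measurable (lebesgue_on S)"
proof -
  obtain N where N: "negligible N" "N \<in> sets lebesgue"
    and good: "\<And>p. p \<in> S - N \<Longrightarrow> 0 \<le> h p \<and> (0 < h p \<longrightarrow> isCont (\<lambda>t. F t p) (h p))"
    using AE_lebesgue_on_neg[OF S ae] by blast
  define hn where "hn n p = real_of_int (floor (h p * 2^n)) / 2^n" for n :: nat and p
  define un where "un n p = F (max 0 (hn n p)) p" for n p
  define vn where "vn n p = (if p \<in> N then 0 else un n p)" for n p
  define v where "v p = (if p \<in> N then 0 else F (h p) p)" for p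
  have um: "un n \<in> borel_measurable (lebesgue_on S)" for n
  proof -
    have fl: "(\<lambda>p. floor (h p * 2^n)) \<in> measurable (lebesgue_on S) (count_space UNIV)"
      by (rule measurable_compose[OF _ measurable_real_floor]) (use hm in measurable)
    have "(\<lambda>p. (\<lambda>k::int. \<lambda>p. F (max 0 (real_of_int k / 2^n)) p) (floor (h p * 2^n)) p) \<in> borel_measurable (lebesgue_on S)"
      by (rule measurable_compose_countable[OF _ fl]) (rule Fm, simp)
    then show ?thesis unfolding un_def hn_def by simp
  qed
  have Nm: "N \<inter> space (lebesgue_on S) \<in> sets (lebesgue_on S)"
    using N S by (simp add: sets_restrict_space_iff)
  have vm: "vn n \<in> borel_measurable (lebesgue_on S)" for n
    unfolding vn_def by (rule measurable_If_set[OF _ _ Nm]) (auto simp: um)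
  have "v \<in> borel_measurable (lebesgue_on S)"
  proof (rule borel_measurable_LIMSEQ_real[OF _ vm])
    fix p assume "p \<in> space (lebesgue_on S)"
    then have pS: "p \<in> S" by simp
    show "(\<lambda>i. vn i p) \<longlonglongrightarrow> v p"
    proof (cases "p \<in> N")
      case True then show ?thesis by (simp add: vn_def v_def)
    next
      case False
      then have g: "0 \<le> h p" "0 < h p \<longrightarrow> isCont (\<lambda>t. F t p) (h p)" using good pS by auto
      have hn0: "0 \<le> hn n p" for n using g(1) unfolding hn_def by (auto intro!: divide_nonneg_pos)
      show ?thesis
      proof (cases "h p = 0")
        case True
        then have "vn n p = v p" for n using False by (simp add: vn_def v_def un_def hn_def)
        then show ?thesis by simp
      next
        case hp: False
        then have ic: "isCont (\<lambda>t. F t p) (h p)" using g by auto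
        have "(\<lambda>n. hn n p) \<longlonglongrightarrow> h p" unfolding hn_def by (rule dyadic_tendsto)
        then have "(\<lambda>n. F (hn n p) p) \<longlonglongrightarrow> F (h p) p" by (rule isCont_tendsto_compose[OF ic])
        moreover have "vn n p = F (hn n p) p" for n using False hn0[of n] by (simp add: vn_def un_def max_def)
        ultimately show ?thesis using False by (simp add: v_def)
      qed
    qed
  qed
  then show ?thesis
    by (rule meas_spike[OF S _ N(1)]) (simp add: v_def)
qed

lemma borel_to_lebesgue_on:
  assumes "f \<in> measurable borel N"
  shows "f \<in> measurable (lebesgue_on S) N"
proof -
  have "f \<in> measurable lborel N" using assms by simp
  then have "f \<in> measurable lebesgue N" by (rule measurable_completion)
  then show ?thesis by (rule measurable_restrict_space1)
qed

lemma test1: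
  fixes e :: "'a::euclidean_space"
  shows "(\<lambda>p::'a\<times>'a. (fst p \<bullet> e < c \<and> \<not> snd p \<bullet> e < c) \<or> (snd p \<bullet> e < c \<and> \<not> fst p \<bullet> e < c)) \<in> measurable borel (count_space UNIV)"
proof -
  have [measurable]: "(\<lambda>p::'a\<times>'a. fst p \<bullet> e) \<in> borel_measurable borel" "(\<lambda>p::'a\<times>'a. snd p \<bullet> e) \<in> borel_measurable borel"
    by (intro borel_measurable_continuous_onI continuous_intros)+
  show ?thesis by measurable
qed

lemma test2:
  fixes e :: "'a::euclidean_space"
  shows "(\<lambda>x. complex_of_real (t * indicator {x. x \<bullet> e < c} x)) \<in> borel_measurable borel"
proof -
  have [measurable]: "{x. x \<bullet> e < c} \<in> sets borel" by (intro borel_open open_Collect_less continuous_intros)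
  show ?thesis by measurable
qed

lemma C1_slice:
  fixes \<Omega> :: "'a::euclidean_space set" and \<phi> :: "real \<Rightarrow> 'a \<Rightarrow> 'a \<Rightarrow> real"
  assumes C1: "C1 \<Omega> \<phi>" and t: "0 \<le> t" and Om: "\<Omega> \<times> \<Omega> \<in> sets lebesgue"
  shows "(\<lambda>p. \<phi> t (fst p) (snd p)) \<in> borel_measurable (lebesgue_on (\<Omega> \<times> \<Omega>))"
proof -
  obtain e :: 'a where e: "e \<in> Basis" using nonempty_Basis by blast
  then have e0: "e \<noteq> 0" by auto
  define cq where "cq n = real_of_rat (from_nat n)" for n :: nat
  define u where "u n x = complex_of_real (t * indicator {x. x \<bullet> e < cq n} x)" for n x
  define P where "P n p = ((fst p \<bullet> e < cq n \<and> \<not> snd p \<bullet> e < cq n) \<or> (snd p \<bullet> e < cq n \<and> \<not> fst p \<bullet> e < cq n))"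
    for n and p :: "'a \<times> 'a"
  define g where "g n p = \<phi> (cmod (u n (fst p) - u n (snd p))) (fst p) (snd p)" for n p
  define Q where "Q p = (LEAST n. P n p)" for p
  have L1: "L1_loc \<Omega> (u n)" for n
  proof -
    have um: "u n \<in> borel_measurable borel" unfolding u_def by (rule test2)
    have "u n \<in> borel_measurable (lebesgue_on K)" for K by (rule borel_to_lebesgue_on[OF um])
    moreover have "integrable (lebesgue_on K) (u n)" if "compact K" for K
    proof -
      interpret finite_measure "lebesgue_on K" by (rule finite_measure_lebesgue_on[OF lmeasurable_compact[OF that]])
      show ?thesis
      proof (rule integrable_const_bound[where B="\<bar>t\<bar>"])
        show "AE x in lebesgue_on K. norm (u n x) \<le> \<bar>t\<bar>" by (intro AE_I2) (auto simp: u_def indicator_def)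
        show "u n \<in> borel_measurable (lebesgue_on K)" by (rule borel_to_lebesgue_on[OF um])
      qed
    qed
    ultimately show ?thesis unfolding L1_loc_def by blast
  qed
  have gm: "g n \<in> borel_measurable (lebesgue_on (\<Omega> \<times> \<Omega>))" for n
    using C1 L1[of n] unfolding C1_def g_def by (simp add: split_beta')
  have Pm: "(\<lambda>p. P n p) \<in> measurable (lebesgue_on (\<Omega> \<times> \<Omega>)) (count_space UNIV)" for n
    unfolding P_def by (rule borel_to_lebesgue_on[OF test1])
  have Qm: "Q \<in> measurable (lebesgue_on (\<Omega> \<times> \<Omega>)) (count_space UNIV)"
    unfolding Q_def by (rule measurable_Least[OF Pm])
  have Wm: "(\<lambda>p. g (Q p) p) \<in> borel_measurable (lebesgue_on (\<Omega> \<times> \<Omega>))"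
    by (rule measurable_compose_countable[OF gm Qm])
  define H where "H = {p::'a\<times>'a. (e, -e) \<bullet> p = 0}"
  have H: "negligible H" unfolding H_def by (rule negligible_hyperplane) (use e0 in \<open>simp add: zero_prod_def\<close>)
  show ?thesis
  proof (rule meas_spike[OF Om Wm H])
    fix p assume p: "p \<in> \<Omega> \<times> \<Omega> - H"
    then have ne: "fst p \<bullet> e \<noteq> snd p \<bullet> e" unfolding H_def by (cases p) (auto simp: inner_commute)
    have "\<exists>n. P n p"
    proof (cases "fst p \<bullet> e < snd p \<bullet> e")
      case True
      then obtain r where "r \<in> \<rat>" "fst p \<bullet> e < r" "r < snd p \<bullet> e" using Rats_dense_in_real by blast
      then obtain q where q: "r = real_of_rat q" by (auto elim: Rats_cases)
      have "cq (to_nat q) = r" unfolding cq_def q by simp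
      then have "P (to_nat q) p" unfolding P_def using \<open>fst p \<bullet> e < r\<close> \<open>r < snd p \<bullet> e\<close> by auto
      then show ?thesis by blast
    next
      case False
      then have "snd p \<bullet> e < fst p \<bullet> e" using ne by auto
      then obtain r where "r \<in> \<rat>" "snd p \<bullet> e < r" "r < fst p \<bullet> e" using Rats_dense_in_real by blast
      then obtain q where q: "r = real_of_rat q" by (auto elim: Rats_cases)
      have "cq (to_nat q) = r" unfolding cq_def q by simp
      then have "P (to_nat q) p" unfolding P_def using \<open>snd p \<bullet> e < r\<close> \<open>r < fst p \<bullet> e\<close> by auto
      then show ?thesis by blast
    qed
    then have PQ: "P (Q p) p" unfolding Q_def by (rule LeastI_ex)
    have "cmod (u (Q p) (fst p) - u (Q p) (snd p)) = t"
      using PQ t unfolding P_def u_def by (auto simp: indicator_def)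
    then show "\<phi> t (fst p) (snd p) = g (Q p) p" unfolding g_def by simp
  qed
qed

definition gp :: "(real \<Rightarrow> real) \<Rightarrow> real \<Rightarrow> real \<Rightarrow> real \<Rightarrow> real \<Rightarrow> real \<Rightarrow> bool" where
  "gp f c1 c2 pm pp \<beta> \<longleftrightarrow> inverse c1 \<le> f 1 \<and> f 1 \<le> c1 \<and> f 0 = 0 \<and> (\<forall>t>0. 0 < f t) \<and>
     (\<forall>t>0. \<exists>D. (f has_real_derivative D) (at t) \<and> 0 < t * D \<and> t * D \<le> c2 * f t) \<and>
     almost_increasing (\<lambda>t. f t / t powr pm) \<beta> \<and> almost_decreasing (\<lambda>t. f t / t powr pp) \<beta> \<and>
     (\<forall>t\<ge>0. 0 \<le> f t)"

lemma gp_D: "gp f c1 c2 pm pp \<beta> \<Longrightarrow> 0 < t \<Longrightarrow> \<exists>D. (f has_real_derivative D) (at t) \<and> 0 < t * D \<and> t * D \<le> c2 * f t"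
  unfolding gp_def by simp

lemma gp_mono: "gp f c1 c2 pm pp \<beta> \<Longrightarrow> \<forall>s t. 0<s \<longrightarrow> s\<le>t \<longrightarrow> f s \<le> f t"
proof (intro allI impI)
  fix s t :: real assume g: "gp f c1 c2 pm pp \<beta>" and st: "0 < s" "s \<le> t"
  have d: "\<forall>t>0. \<exists>D. (f has_real_derivative D) (at t) \<and> 0 < t * D"
  proof (intro allI impI)
    fix t :: real assume "0 < t"
    from gp_D[OF g this] obtain D where "(f has_real_derivative D) (at t)" "0 < t * D" by blast
    then show "\<exists>D. (f has_real_derivative D) (at t) \<and> 0 < t * D" by blast
  qed
  show "f s \<le> f t" by (rule deriv_mono[OF d st])
qed

lemma gp_growth: "gp f c1 c2 pm pp \<beta> \<Longrightarrow> \<forall>a b. 0<a \<longrightarrow> a\<le>b \<longrightarrow> f b * a powr c2 \<le> f a * b powr c2"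
proof (intro allI impI)
  fix a b :: real assume g: "gp f c1 c2 pm pp \<beta>" and ab: "0 < a" "a \<le> b"
  have d: "\<forall>t>0. \<exists>D. (f has_real_derivative D) (at t) \<and> t * D \<le> c2 * f t"
  proof (intro allI impI)
    fix t :: real assume "0 < t"
    from gp_D[OF g this] obtain D where "(f has_real_derivative D) (at t)" "t * D \<le> c2 * f t" by blast
    then show "\<exists>D. (f has_real_derivative D) (at t) \<and> t * D \<le> c2 * f t" by blast
  qed
  have p: "\<forall>t>0. 0 < f t" using g unfolding gp_def by simp
  show "f b * a powr c2 \<le> f a * b powr c2" by (rule deriv_growth[OF d p ab])
qed

lemma gp_pos: "gp f c1 c2 pm pp \<beta> \<Longrightarrow> 0 < t \<Longrightarrow> 0 < f t"
  unfolding gp_def by simp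

lemma gp_nn: "gp f c1 c2 pm pp \<beta> \<Longrightarrow> 0 \<le> t \<Longrightarrow> 0 \<le> f t"
  unfolding gp_def by simp

lemma gp_I:
  assumes "inverse c1 \<le> f 1" "f 1 \<le> c1" "f 0 = 0" "\<And>t. 0 < t \<Longrightarrow> 0 < f t"
    "\<And>t. 0 < t \<Longrightarrow> \<exists>D. (f has_real_derivative D) (at t) \<and> 0 < t * D \<and> t * D \<le> c2 * f t"
    "almost_increasing (\<lambda>t. f t / t powr pm) \<beta>" "almost_decreasing (\<lambda>t. f t / t powr pp) \<beta>"
    "\<And>t. 0 \<le> t \<Longrightarrow> 0 \<le> f t"
  shows "gp f c1 c2 pm pp \<beta>"
  using assms unfolding gp_def by blast

lemma gp_E:
  assumes "gp f c1 c2 pm pp \<beta>"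
  shows "inverse c1 \<le> f 1" "f 1 \<le> c1" "f 0 = 0" "\<forall>t>0. 0 < f t"
    "almost_increasing (\<lambda>t. f t / t powr pm) \<beta>" "almost_decreasing (\<lambda>t. f t / t powr pp) \<beta>"
    "\<forall>t\<ge>0. 0 \<le> f t" "\<forall>t>0. 0 \<le> f t"
  using assms unfolding gp_def by auto

lemma ai_weaken:
  assumes "almost_increasing r \<beta>" "\<beta> \<le> \<beta>'" "\<forall>t>0. 0 \<le> r t"
  shows "almost_increasing r \<beta>'"
  unfolding almost_increasing_def
proof (intro allI impI)
  fix s t :: real assume st: "0 < s" "s \<le> t"
  have "r s \<le> \<beta> * r t" using assms(1) st unfolding almost_increasing_def by blast
  also have "\<dots> \<le> \<beta>' * r t" using assms st by (intro mult_right_mono) auto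
  finally show "r s \<le> \<beta>' * r t" .
qed

lemma ad_weaken:
  assumes "almost_decreasing r \<beta>" "\<beta> \<le> \<beta>'" "\<forall>t>0. 0 \<le> r t"
  shows "almost_decreasing r \<beta>'"
  unfolding almost_decreasing_def
proof (intro allI impI)
  fix s t :: real assume st: "0 < s" "s \<le> t"
  have "r t \<le> \<beta> * r s" using assms(1) st unfolding almost_decreasing_def by blast
  also have "\<dots> \<le> \<beta>' * r s" using assms st by (intro mult_right_mono) auto
  finally show "\<beta>' * r s \<ge> r t" .
qed

lemma gp_sum:
  assumes f: "gp f c1 c2 pm pp \<beta>" and g: "gp g c1' c2' pm' pp' \<beta>'"
    and c: "0 < c1" "0 < c1'" "0 \<le> \<beta>" "0 \<le> \<beta>'"
  shows "gp (\<lambda>t. f t + g t) (c1 + c1') (max c2 c2') (min pm pm') (max pp pp') (max \<beta> \<beta>')"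
proof (rule gp_I)
  note fE = gp_E[OF f] and gE = gp_E[OF g]
  show "inverse (c1 + c1') \<le> f 1 + g 1"
  proof -
    have "inverse (c1 + c1') \<le> inverse c1" using c by (intro le_imp_inverse_le) auto
    also have "\<dots> \<le> f 1" using fE by auto
    also have "\<dots> \<le> f 1 + g 1" using gE by auto
    finally show ?thesis .
  qed
  show "f 1 + g 1 \<le> c1 + c1'" using fE gE by auto
  show "f 0 + g 0 = 0" using fE gE by auto
  show "0 < f t + g t" if "0 < t" for t
  proof -
    have "0 < f t" "0 < g t" using fE(4) gE(4) that by auto
    then show ?thesis by simp
  qed
  show "0 \<le> f t + g t" if "0 \<le> t" for t using fE gE that by auto
  show "\<exists>D. ((\<lambda>t. f t + g t) has_real_derivative D) (at t) \<and> 0 < t * D \<and> t * D \<le> max c2 c2' * (f t + g t)"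
    if t: "0 < t" for t
  proof -
    obtain D1 where D1: "(f has_real_derivative D1) (at t)" "0 < t * D1" "t * D1 \<le> c2 * f t" using gp_D[OF f t] by blast
    obtain D2 where D2: "(g has_real_derivative D2) (at t)" "0 < t * D2" "t * D2 \<le> c2' * g t" using gp_D[OF g t] by blast
    have "c2 * f t \<le> max c2 c2' * f t" "c2' * g t \<le> max c2 c2' * g t"
      using fE gE t by (auto intro!: mult_right_mono)
    then have "t * (D1 + D2) \<le> max c2 c2' * (f t + g t)" using D1 D2 by (simp add: distrib_left)
    moreover have "0 < t * (D1 + D2)" using D1 D2 by (simp add: distrib_left)
    ultimately show ?thesis using DERIV_add[OF D1(1) D2(1)] by blast
  qed
  show "almost_increasing (\<lambda>t. (f t + g t) / t powr min pm pm') (max \<beta> \<beta>')"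
  proof -
    have "almost_increasing (\<lambda>t. f t / t powr min pm pm' + g t / t powr min pm pm') (max \<beta> \<beta>')"
    proof (rule ai_add)
      show "almost_increasing (\<lambda>t. f t / t powr min pm pm') \<beta>" by (rule ai_exp[OF fE(5)]) (use fE c in auto)
      show "almost_increasing (\<lambda>t. g t / t powr min pm pm') \<beta>'" by (rule ai_exp[OF gE(5)]) (use gE c in auto)
    qed (use fE gE in auto)
    then show ?thesis by (simp add: add_divide_distrib)
  qed
  show "almost_decreasing (\<lambda>t. (f t + g t) / t powr max pp pp') (max \<beta> \<beta>')"
  proof -
    have "almost_decreasing (\<lambda>t. f t / t powr max pp pp' + g t / t powr max pp pp') (max \<beta> \<beta>')"
    proof (rule ad_add)
      show "almost_decreasing (\<lambda>t. f t / t powr max pp pp') \<beta>" by (rule ad_exp[OF fE(6)]) (use fE c in auto)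
      show "almost_decreasing (\<lambda>t. g t / t powr max pp pp') \<beta>'" by (rule ad_exp[OF gE(6)]) (use gE c in auto)
    qed (use fE gE in auto)
    then show ?thesis by (simp add: add_divide_distrib)
  qed
qed

lemma ai_const: "0 \<le> k \<Longrightarrow> almost_increasing (\<lambda>t. k) 1"
  unfolding almost_increasing_def by simp
lemma ad_const: "0 \<le> k \<Longrightarrow> almost_decreasing (\<lambda>t. k) 1"
  unfolding almost_decreasing_def by simp

lemma ai_cong: "almost_increasing r \<beta> \<Longrightarrow> (\<And>t. 0 < t \<Longrightarrow> r t = r' t) \<Longrightarrow> almost_increasing r' \<beta>"
  unfolding almost_increasing_def by (metis less_le_trans)
lemma ad_cong: "almost_decreasing r \<beta> \<Longrightarrow> (\<And>t. 0 < t \<Longrightarrow> r t = r' t) \<Longrightarrow> almost_decreasing r' \<beta>"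
  unfolding almost_decreasing_def by (metis less_le_trans)

lemma gp_b:
  assumes f: "gp f c1 c2 pm pp \<beta>" and c: "0 < c1" "0 < c5" "c5 < k" "k < c6" "0 \<le> \<beta>"
  shows "gp (\<lambda>t. f t * k) (max (c1 * \<bar>c6\<bar>) (c1 / c5)) c2 pm pp \<beta>"
proof (rule gp_I)
  note fE = gp_E[OF f]
  have k: "0 < k" using c by simp
  have f1: "0 < f 1" using fE(4) by simp
  show "inverse (max (c1 * \<bar>c6\<bar>) (c1 / c5)) \<le> f 1 * k"
  proof -
    have "inverse (max (c1 * \<bar>c6\<bar>) (c1 / c5)) \<le> inverse (c1 / c5)" using c by (intro le_imp_inverse_le) auto
    also have "\<dots> = inverse c1 * c5" by (simp add: field_simps)
    also have "\<dots> \<le> f 1 * k" using fE(1) c f1 by (intro mult_mono) auto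
    finally show ?thesis .
  qed
  show "f 1 * k \<le> max (c1 * \<bar>c6\<bar>) (c1 / c5)"
  proof -
    have "f 1 * k \<le> c1 * \<bar>c6\<bar>" using fE(2) c f1 by (intro mult_mono) auto
    then show ?thesis by simp
  qed
  show "f 0 * k = 0" using fE by simp
  show "0 < f t * k" if "0 < t" for t
  proof -
    have "0 < f t" using fE(4) that by auto
    then show ?thesis using k by simp
  qed
  show "0 \<le> f t * k" if "0 \<le> t" for t
  proof -
    have "0 \<le> f t" using fE(7) that by auto
    then show ?thesis using k by simp
  qed
  show "\<exists>D. ((\<lambda>t. f t * k) has_real_derivative D) (at t) \<and> 0 < t * D \<and> t * D \<le> c2 * (f t * k)"
    if t: "0 < t" for t
  proof -
    obtain D1 where D1: "(f has_real_derivative D1) (at t)" "0 < t * D1" "t * D1 \<le> c2 * f t" using gp_D[OF f t] by blast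
    have "t * (D1 * k) = (t * D1) * k" by simp
    moreover have "(t * D1) * k \<le> (c2 * f t) * k" using D1 k by (intro mult_right_mono) auto
    moreover have "0 < (t * D1) * k" using D1 k by simp
    ultimately show ?thesis using DERIV_cmult_right[OF D1(1), of k] by (intro exI[of _ "D1 * k"]) (simp add: ac_simps)
  qed
  show "almost_increasing (\<lambda>t. f t * k / t powr pm) \<beta>"
  proof -
    have "almost_increasing (\<lambda>t. f t / t powr pm * k) (\<beta> * 1)"
      by (rule ai_mult[OF fE(5) ai_const]) (use fE k c in auto)
    then show ?thesis by (simp add: ac_simps)
  qed
  show "almost_decreasing (\<lambda>t. f t * k / t powr pp) \<beta>"
  proof -
    have "almost_decreasing (\<lambda>t. f t / t powr pp * k) (\<beta> * 1)"
      by (rule ad_mult[OF fE(6) ad_const]) (use fE k c in auto)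
    then show ?thesis by (simp add: ac_simps)
  qed
qed

lemma gp_prod:
  assumes f: "gp f c1 c2 pm pp \<beta>" and g: "gp g c1' c2' pm' pp' \<beta>'"
    and c: "0 < c1" "0 < c1'" "0 \<le> \<beta>" "0 \<le> \<beta>'"
  shows "gp (\<lambda>t. f t * g t) (c1 * c1') (c2 + c2') (pm + pm') (pp + pp') (\<beta> * \<beta>')"
proof (rule gp_I)
  note fE = gp_E[OF f] and gE = gp_E[OF g]
  show "inverse (c1 * c1') \<le> f 1 * g 1"
  proof -
    have "0 < f 1" "0 < g 1" using fE(4) gE(4) by auto
    then show ?thesis using fE(1) gE(1) c by (simp add: inverse_mult_distrib) (intro mult_mono, auto)
  qed
  show "f 1 * g 1 \<le> c1 * c1'"
  proof -
    have "0 < f 1" "0 < g 1" using fE(4) gE(4) by auto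
    then show ?thesis using fE(2) gE(2) by (intro mult_mono) auto
  qed
  show "f 0 * g 0 = 0" using fE by simp
  show "0 < f t * g t" if "0 < t" for t
  proof -
    have "0 < f t" "0 < g t" using fE(4) gE(4) that by auto
    then show ?thesis by simp
  qed
  show "0 \<le> f t * g t" if "0 \<le> t" for t
  proof -
    have "0 \<le> f t" "0 \<le> g t" using fE(7) gE(7) that by auto
    then show ?thesis by simp
  qed
  show "\<exists>D. ((\<lambda>t. f t * g t) has_real_derivative D) (at t) \<and> 0 < t * D \<and> t * D \<le> (c2 + c2') * (f t * g t)"
    if t: "0 < t" for t
  proof -
    obtain D1 where D1: "(f has_real_derivative D1) (at t)" "0 < t * D1" "t * D1 \<le> c2 * f t" using gp_D[OF f t] by blast
    obtain D2 where D2: "(g has_real_derivative D2) (at t)" "0 < t * D2" "t * D2 \<le> c2' * g t" using gp_D[OF g t] by blast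
    have p: "0 < f t" "0 < g t" using fE(4) gE(4) t by auto
    have e: "t * (D1 * g t + f t * D2) = (t * D1) * g t + f t * (t * D2)" by (simp add: algebra_simps)
    have "(t * D1) * g t \<le> (c2 * f t) * g t" using D1 p by (intro mult_right_mono) auto
    moreover have "f t * (t * D2) \<le> f t * (c2' * g t)" using D2 p by (intro mult_left_mono) auto
    ultimately have "t * (D1 * g t + f t * D2) \<le> (c2 + c2') * (f t * g t)" unfolding e by (simp add: algebra_simps)
    moreover have "0 < t * (D1 * g t + f t * D2)"
    proof -
      have "0 < (t * D1) * g t" "0 < f t * (t * D2)" using D1 D2 p by simp_all
      then show ?thesis unfolding e by simp
    qed
    moreover have "((\<lambda>t. f t * g t) has_real_derivative D1 * g t + f t * D2) (at t)"
      using DERIV_mult[OF D1(1) D2(1)] by (simp add: ac_simps)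
    ultimately show ?thesis by blast
  qed
  show "almost_increasing (\<lambda>t. f t * g t / t powr (pm + pm')) (\<beta> * \<beta>')"
  proof -
    have "almost_increasing (\<lambda>t. f t / t powr pm * (g t / t powr pm')) (\<beta> * \<beta>')"
      by (rule ai_mult[OF fE(5) gE(5)]) (use fE gE c in auto)
    moreover have "f t / t powr pm * (g t / t powr pm') = f t * g t / t powr (pm + pm')" if "0 < t" for t
      using that by (simp add: powr_add)
    ultimately show ?thesis by (rule ai_cong)
  qed
  show "almost_decreasing (\<lambda>t. f t * g t / t powr (pp + pp')) (\<beta> * \<beta>')"
  proof -
    have "almost_decreasing (\<lambda>t. f t / t powr pp * (g t / t powr pp')) (\<beta> * \<beta>')"
      by (rule ad_mult[OF fE(6) gE(6)]) (use fE gE c in auto)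
    moreover have "f t / t powr pp * (g t / t powr pp') = f t * g t / t powr (pp + pp')" if "0 < t" for t
      using that by (simp add: powr_add)
    ultimately show ?thesis by (rule ad_cong)
  qed
qed

lemma gp_comp:
  assumes f: "gp f cf c2f pmf ppf bf" and g: "gp g cg c2g pmg ppg bg"
    and c: "0 < cf" "0 < cg" "1 \<le> bf" "1 \<le> bg" "0 < c2f" "0 < pmf" "pmf \<le> ppf"
  shows "gp (\<lambda>t. f (g t)) (max 1 cf * (max 1 cg) powr c2f) (c2f * c2g) (pmg * pmf) (ppg * ppf) (bf * bg powr ppf)"
proof (rule gp_I)
  note fE = gp_E[OF f] and gE = gp_E[OF g]
  note fm = gp_mono[OF f] and fg = gp_growth[OF f]
  define K where "K = max 1 cg"
  define v where "v = g 1"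
  have K1: "1 \<le> K" unfolding K_def by simp
  have vK: "v \<le> K" using gE(2) unfolding v_def K_def by simp
  have vK2: "inverse K \<le> v"
  proof (cases "1 \<le> cg")
    case True then show ?thesis using gE(1) unfolding v_def K_def by simp
  next
    case False
    then have "inverse cg > 1" using c by (simp add: one_less_inverse)
    then show ?thesis using gE(1) False unfolding v_def K_def by simp
  qed
  have v0: "0 < v" unfolding v_def using gE(4) by simp
  have f1: "0 < f 1" using fE(4) by simp
  have KP: "1 \<le> K powr c2f" using K1 c by (simp add: ge_one_powr_ge_zero)
  have Cge: "max 1 cf \<le> max 1 cf * K powr c2f" using mult_left_mono[OF KP, of "max 1 cf"] by simp
  show "f (g 1) \<le> max 1 cf * (max 1 cg) powr c2f"
  proof (cases "1 \<le> v")
    case True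
    have "f v * 1 powr c2f \<le> f 1 * v powr c2f" using fg[rule_format, of 1 v] True by simp
    then have "f v \<le> f 1 * v powr c2f" by simp
    also have "\<dots> \<le> max 1 cf * K powr c2f"
      using fE(2) f1 vK v0 c by (intro mult_mono powr_mono2) auto
    finally show ?thesis unfolding v_def K_def .
  next
    case False
    have "f v \<le> f 1" using fm False v0 by auto
    also have "\<dots> \<le> max 1 cf * K powr c2f" using fE(2) Cge by simp
    finally show ?thesis unfolding v_def K_def .
  qed
  show "inverse (max 1 cf * (max 1 cg) powr c2f) \<le> f (g 1)"
  proof -
    have iC: "inverse (max 1 cf * K powr c2f) = inverse (max 1 cf) * (inverse K) powr c2f"
      using K1 by (simp add: inverse_mult_distrib inverse_powr)
    have icf: "inverse (max 1 cf) \<le> f 1"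
    proof -
      have "inverse (max 1 cf) \<le> inverse cf" using c by (intro le_imp_inverse_le) auto
      then show ?thesis using fE(1) by simp
    qed
    have iK: "(inverse K) powr c2f \<le> 1" using KP by (simp add: inverse_powr inverse_le_1_iff)
    have "inverse (max 1 cf) * (inverse K) powr c2f \<le> f v"
    proof (cases "1 \<le> v")
      case True
      have "inverse (max 1 cf) * (inverse K) powr c2f \<le> f 1 * 1"
        using icf iK by (intro mult_mono) (auto simp: f1 less_imp_le)
      also have "\<dots> \<le> f v" using fm True by auto
      finally show ?thesis .
    next
      case False
      have "f 1 * v powr c2f \<le> f v * 1 powr c2f" using fg[rule_format, of v 1] False v0 by simp
      then have "f 1 * v powr c2f \<le> f v" by simp
      moreover have "inverse (max 1 cf) * (inverse K) powr c2f \<le> f 1 * v powr c2f"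
        using icf vK2 K1 c f1 by (intro mult_mono powr_mono2) auto
      ultimately show ?thesis by linarith
    qed
    then show ?thesis unfolding K_def[symmetric] v_def[symmetric] iC .
  qed
  show "f (g 0) = 0" using fE gE by simp
  show "0 < f (g t)" if "0 < t" for t
  proof -
    have "0 < g t" using gE(4) that by auto
    then show ?thesis using fE(4) by auto
  qed
  show "0 \<le> f (g t)" if "0 \<le> t" for t
  proof -
    have "0 \<le> g t" using gE(7) that by auto
    then show ?thesis using fE(7) by auto
  qed
  show "\<exists>D. ((\<lambda>t. f (g t)) has_real_derivative D) (at t) \<and> 0 < t * D \<and> t * D \<le> c2f * c2g * f (g t)"
    if t: "0 < t" for t
  proof -
    have gt: "0 < g t" using gE(4) t by auto
    obtain D2 where D2: "(g has_real_derivative D2) (at t)" "0 < t * D2" "t * D2 \<le> c2g * g t" using gp_D[OF g t] by blast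
    obtain D1 where D1: "(f has_real_derivative D1) (at (g t))" "0 < g t * D1" "g t * D1 \<le> c2f * f (g t)" using gp_D[OF f gt] by blast
    have D1p: "0 < D1" using D1(2) gt by (simp add: zero_less_mult_iff)
    have e: "t * (D1 * D2) = D1 * (t * D2)" by simp
    have "D1 * (t * D2) \<le> D1 * (c2g * g t)" using D2 D1p by (intro mult_left_mono) auto
    also have "\<dots> = c2g * (g t * D1)" by simp
    also have "\<dots> \<le> c2g * (c2f * f (g t))"
    proof (rule mult_left_mono[OF D1(3)])
      have "0 < t * D2" by (rule D2(2))
      then have "0 < c2g * g t" using D2(3) by linarith
      then show "0 \<le> c2g" using gt by (simp add: zero_less_mult_iff)
    qed
    finally have "t * (D1 * D2) \<le> c2f * c2g * f (g t)" unfolding e by (simp add: ac_simps)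
    moreover have "0 < t * (D1 * D2)" unfolding e using D1p D2 by simp
    ultimately show ?thesis using DERIV_chain2[OF D1(1) D2(1)] by blast
  qed
  have rnn: "\<forall>t>0. 0 \<le> f (g t) / t powr q" for q
  proof (intro allI impI)
    fix t :: real assume "0 < t"
    then have "0 < g t" using gE(4) by auto
    then show "0 \<le> f (g t) / t powr q" using fE(8) by auto
  qed
  show "almost_increasing (\<lambda>t. f (g t) / t powr (pmg * pmf)) (bf * bg powr ppf)"
  proof (rule ai_weaken[OF ai_comp[OF fE(5) gE(5) gp_mono[OF g] gE(4) fE(8)]])
    show "bf * bg powr pmf \<le> bf * bg powr ppf" using c by (intro mult_left_mono powr_mono) auto
  qed (use c rnn in auto)
  show "almost_decreasing (\<lambda>t. f (g t) / t powr (ppg * ppf)) (bf * bg powr ppf)"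
    by (rule ad_comp[OF fE(6) gE(6) gp_mono[OF g] gE(4) fE(8)]) (use c in auto)
qed

lemma open_sets_lebesgue2:
  assumes "open (\<Omega>::'a::euclidean_space set)"
  shows "\<Omega> \<times> \<Omega> \<in> sets lebesgue"
proof -
  have "open (\<Omega> \<times> \<Omega>)" using open_Times[OF assms assms] .
  then have "\<Omega> \<times> \<Omega> \<in> sets lborel" by simp
  then show ?thesis by (rule sets_completionI_sets)
qed

lemma extractC:
  fixes \<phi> :: "real \<Rightarrow> 'a::euclidean_space \<Rightarrow> 'a \<Rightarrow> real"
  assumes "conditions_C \<Omega> \<phi>"
  obtains c1 c2 pm pp \<beta> where "0<c1" "1<c2" "1<pm" "pm\<le>pp" "1\<le>\<beta>"
    "AE p in lebesgue_on (\<Omega>\<times>\<Omega>). p \<in> \<Omega>\<times>\<Omega> \<and> gp (\<lambda>z. \<phi> z (fst p) (snd p)) c1 c2 pm pp \<beta>"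
proof -
  have nn: "nonneg_on \<Omega> \<phi>" and c3: "C3 \<Omega> \<phi>" and c4: "C4 \<Omega> \<phi>" and c5: "C5 \<Omega> \<phi>"
    using assms unfolding conditions_C_def by auto
  obtain pm pp \<beta> where p: "1 < pm" "pm \<le> pp" "1 \<le> \<beta>" and A3: "AE p in lebesgue_on (\<Omega> \<times> \<Omega>).
        almost_increasing (\<lambda>t. \<phi> t (fst p) (snd p) / t powr pm) \<beta> \<and>
        almost_decreasing (\<lambda>t. \<phi> t (fst p) (snd p) / t powr pp) \<beta>"
    using c3 unfolding C3_def by blast
  obtain c1 where c1: "c1 > 0" and A4: "AE p in lebesgue_on (\<Omega> \<times> \<Omega>).
     inverse c1 \<le> \<phi> 1 (fst p) (snd p) \<and> \<phi> 1 (fst p) (snd p) \<le> c1 \<and>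
     \<phi> 0 (fst p) (snd p) = 0 \<and> (\<forall>t>0. 0 < \<phi> t (fst p) (snd p))"
    using c4 unfolding C4_def by blast
  obtain c2 where c2: "c2 > 1" and A5: "AE p in lebesgue_on (\<Omega> \<times> \<Omega>).
     \<forall>t>0. \<exists>D. ((\<lambda>z. \<phi> z (fst p) (snd p)) has_real_derivative D) (at t) \<and>
        0 < t * D \<and> t * D \<le> c2 * \<phi> t (fst p) (snd p)"
    using c5 unfolding C5_def by blast
  have "AE p in lebesgue_on (\<Omega>\<times>\<Omega>). p \<in> \<Omega>\<times>\<Omega> \<and> gp (\<lambda>z. \<phi> z (fst p) (snd p)) c1 c2 pm pp \<beta>"
    using A3 A4 A5 AE_space[of "lebesgue_on (\<Omega>\<times>\<Omega>)"]
  proof eventually_elim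
    case (elim p)
    then have pS: "p \<in> \<Omega>\<times>\<Omega>" by simp
    then have "\<forall>t\<ge>0. 0 \<le> \<phi> t (fst p) (snd p)" using nn unfolding nonneg_on_def by (cases p) auto
    then show ?case using elim pS unfolding gp_def by blast
  qed
  then show ?thesis using that c1 c2 p by blast
qed

lemma buildC:
  assumes "nonneg_on \<Omega> \<theta>" "C1 \<Omega> \<theta>" "C2 \<Omega> \<theta>" "0<c1" "1<c2" "1<pm" "pm\<le>pp" "1\<le>\<beta>"
    and A: "AE p in lebesgue_on (\<Omega>\<times>\<Omega>). gp (\<lambda>z. \<theta> z (fst p) (snd p)) c1 c2 pm pp \<beta>"
  shows "conditions_C \<Omega> \<theta>"
proof -
  have a3: "AE p in lebesgue_on (\<Omega> \<times> \<Omega>).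
        almost_increasing (\<lambda>t. \<theta> t (fst p) (snd p) / t powr pm) \<beta> \<and>
        almost_decreasing (\<lambda>t. \<theta> t (fst p) (snd p) / t powr pp) \<beta>"
    using A by eventually_elim (simp add: gp_def)
  have a4: "AE p in lebesgue_on (\<Omega> \<times> \<Omega>).
     inverse c1 \<le> \<theta> 1 (fst p) (snd p) \<and> \<theta> 1 (fst p) (snd p) \<le> c1 \<and>
     \<theta> 0 (fst p) (snd p) = 0 \<and> (\<forall>t>0. 0 < \<theta> t (fst p) (snd p))"
    using A by eventually_elim (simp add: gp_def)
  have a5: "AE p in lebesgue_on (\<Omega> \<times> \<Omega>).
     \<forall>t>0. \<exists>D. ((\<lambda>z. \<theta> z (fst p) (snd p)) has_real_derivative D) (at t) \<and>
        0 < t * D \<and> t * D \<le> c2 * \<theta> t (fst p) (snd p)"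
    using A by eventually_elim (simp add: gp_def)
  have "C3 \<Omega> \<theta>" unfolding C3_def using a3 assms(6-8) by blast
  moreover have "C4 \<Omega> \<theta>" unfolding C4_def using a4 assms(4) by blast
  moreover have "C5 \<Omega> \<theta>" unfolding C5_def using a5 assms(5) by blast
  ultimately show ?thesis using assms(1-3) unfolding conditions_C_def by blast
qed

lemma C1_get:
  assumes "C1 \<Omega> \<phi>" "L1_loc \<Omega> u"
  shows "(\<lambda>p. \<phi> (cmod (u (fst p) - u (snd p))) (fst p) (snd p)) \<in> borel_measurable (lebesgue_on (\<Omega> \<times> \<Omega>))"
  using assms unfolding C1_def by (simp add: split_beta')

lemma C1_put:
  assumes "\<And>u. L1_loc \<Omega> u \<Longrightarrow> (\<lambda>p. \<theta> (cmod (u (fst p) - u (snd p))) (fst p) (snd p)) \<in> borel_measurable (lebesgue_on (\<Omega> \<times> \<Omega>))"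
  shows "C1 \<Omega> \<theta>"
  using assms unfolding C1_def by (simp add: split_beta')

lemma C1_sum: assumes "C1 \<Omega> \<phi>" "C1 \<Omega> \<psi>" shows "C1 \<Omega> (\<lambda>z x y. \<phi> z x y + \<psi> z x y)"
proof (rule C1_put)
  fix u assume u: "L1_loc \<Omega> u"
  from borel_measurable_add[OF C1_get[OF assms(1) u] C1_get[OF assms(2) u]]
  show "(\<lambda>p. \<phi> (cmod (u (fst p) - u (snd p))) (fst p) (snd p) + \<psi> (cmod (u (fst p) - u (snd p))) (fst p) (snd p)) \<in> borel_measurable (lebesgue_on (\<Omega> \<times> \<Omega>))" .
qed

lemma C1_prod: assumes "C1 \<Omega> \<phi>" "C1 \<Omega> \<psi>" shows "C1 \<Omega> (\<lambda>z x y. \<phi> z x y * \<psi> z x y)"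
proof (rule C1_put)
  fix u assume u: "L1_loc \<Omega> u"
  from borel_measurable_times[OF C1_get[OF assms(1) u] C1_get[OF assms(2) u]]
  show "(\<lambda>p. \<phi> (cmod (u (fst p) - u (snd p))) (fst p) (snd p) * \<psi> (cmod (u (fst p) - u (snd p))) (fst p) (snd p)) \<in> borel_measurable (lebesgue_on (\<Omega> \<times> \<Omega>))" .
qed

lemma C1_b:
  assumes "C1 \<Omega> \<phi>" "(\<lambda>(x, y). b x y) \<in> borel_measurable (lebesgue_on (\<Omega> \<times> \<Omega>))"
  shows "C1 \<Omega> (\<lambda>z x y. \<phi> z x y * b x y)"
proof (rule C1_put)
  fix u assume u: "L1_loc \<Omega> u"
  have "(\<lambda>p. b (fst p) (snd p)) \<in> borel_measurable (lebesgue_on (\<Omega> \<times> \<Omega>))" using assms(2) by (simp add: split_beta')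
  from borel_measurable_times[OF C1_get[OF assms(1) u] this]
  show "(\<lambda>p. \<phi> (cmod (u (fst p) - u (snd p))) (fst p) (snd p) * b (fst p) (snd p)) \<in> borel_measurable (lebesgue_on (\<Omega> \<times> \<Omega>))" .
qed

lemma C1_comp:
  fixes \<phi> \<psi> :: "real \<Rightarrow> 'a::euclidean_space \<Rightarrow> 'a \<Rightarrow> real"
  assumes Om: "open \<Omega>" and c1: "C1 \<Omega> \<phi>" "C1 \<Omega> \<psi>" and nn: "nonneg_on \<Omega> \<psi>"
    and A: "AE p in lebesgue_on (\<Omega>\<times>\<Omega>). p \<in> \<Omega>\<times>\<Omega> \<and> gp (\<lambda>z. \<phi> z (fst p) (snd p)) c1 c2 pm pp \<beta>"
  shows "C1 \<Omega> (\<lambda>z x y. \<phi> (\<psi> z x y) x y)"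
proof (rule C1_put)
  fix u assume u: "L1_loc \<Omega> u"
  have S: "\<Omega> \<times> \<Omega> \<in> sets lebesgue" by (rule open_sets_lebesgue2[OF Om])
  define h where "h p = \<psi> (cmod (u (fst p) - u (snd p))) (fst p) (snd p)" for p
  have "(\<lambda>p. (\<lambda>t p. \<phi> t (fst p) (snd p)) (h p) p) \<in> borel_measurable (lebesgue_on (\<Omega> \<times> \<Omega>))"
  proof (rule carath[OF S, where F="\<lambda>t p. \<phi> t (fst p) (snd p)" and h=h])
    show "(\<lambda>p. \<phi> t (fst p) (snd p)) \<in> borel_measurable (lebesgue_on (\<Omega> \<times> \<Omega>))" if "0 \<le> t" for t
      by (rule C1_slice[OF c1(1) that S])
    show "h \<in> borel_measurable (lebesgue_on (\<Omega> \<times> \<Omega>))" unfolding h_def by (rule C1_get[OF c1(2) u])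
    show "AE p in lebesgue_on (\<Omega> \<times> \<Omega>). 0 \<le> h p \<and> (0 < h p \<longrightarrow> isCont (\<lambda>t. \<phi> t (fst p) (snd p)) (h p))"
      using A
    proof eventually_elim
      case (elim p)
      then have "0 \<le> h p" using nn unfolding nonneg_on_def h_def by (cases p) auto
      moreover have "isCont (\<lambda>t. \<phi> t (fst p) (snd p)) (h p)" if hp: "0 < h p"
      proof -
        obtain D where "((\<lambda>z. \<phi> z (fst p) (snd p)) has_real_derivative D) (at (h p))"
          using gp_D[OF conjunct2[OF elim] hp] by blast
        then show ?thesis by (rule DERIV_isCont)
      qed
      ultimately show ?case by blast
    qed
  qed
  then show "(\<lambda>p. \<phi> (\<psi> (cmod (u (fst p) - u (snd p))) (fst p) (snd p)) (fst p) (snd p)) \<in> borel_measurable (lebesgue_on (\<Omega> \<times> \<Omega>))"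
    unfolding h_def by simp
qed

lemma C2_get:
  assumes "C2 \<Omega> \<phi>" "0 < \<epsilon>"
  obtains \<delta> where "0 < \<delta>" "\<delta> < 1" "AE p in lebesgue_on (\<Omega> \<times> \<Omega>). \<forall>s t. 0 < s \<longrightarrow> 0 < t \<longrightarrow> \<bar>s - t\<bar> \<ge> \<epsilon> * max s t \<longrightarrow>
        \<phi> ((s + t) / 2) (fst p) (snd p) \<le> (1 - \<delta>) * ((\<phi> s (fst p) (snd p) + \<phi> t (fst p) (snd p)) / 2)"
  using assms unfolding C2_def by blast

lemma C2_sum:
  assumes c2: "C2 \<Omega> \<phi>" "C2 \<Omega> \<psi>"
    and Af: "AE p in lebesgue_on (\<Omega>\<times>\<Omega>). p \<in> \<Omega>\<times>\<Omega> \<and> gp (\<lambda>z. \<phi> z (fst p) (snd p)) c1 c2 pm pp \<beta>"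
    and Ag: "AE p in lebesgue_on (\<Omega>\<times>\<Omega>). p \<in> \<Omega>\<times>\<Omega> \<and> gp (\<lambda>z. \<psi> z (fst p) (snd p)) c1' c2' pm' pp' \<beta>'"
  shows "C2 \<Omega> (\<lambda>z x y. \<phi> z x y + \<psi> z x y)"
  unfolding C2_def
proof (intro allI impI)
  fix \<epsilon> :: real assume e: "0 < \<epsilon>"
  obtain d1 where d1: "0 < d1" "d1 < 1" and A1: "AE p in lebesgue_on (\<Omega> \<times> \<Omega>). \<forall>s t. 0 < s \<longrightarrow> 0 < t \<longrightarrow> \<bar>s - t\<bar> \<ge> \<epsilon> * max s t \<longrightarrow>
        \<phi> ((s + t) / 2) (fst p) (snd p) \<le> (1 - d1) * ((\<phi> s (fst p) (snd p) + \<phi> t (fst p) (snd p)) / 2)"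
    using C2_get[OF c2(1) e] by blast
  obtain d2 where d2: "0 < d2" "d2 < 1" and A2: "AE p in lebesgue_on (\<Omega> \<times> \<Omega>). \<forall>s t. 0 < s \<longrightarrow> 0 < t \<longrightarrow> \<bar>s - t\<bar> \<ge> \<epsilon> * max s t \<longrightarrow>
        \<psi> ((s + t) / 2) (fst p) (snd p) \<le> (1 - d2) * ((\<psi> s (fst p) (snd p) + \<psi> t (fst p) (snd p)) / 2)"
    using C2_get[OF c2(2) e] by blast
  have "AE p in lebesgue_on (\<Omega> \<times> \<Omega>). \<forall>s t. 0 < s \<longrightarrow> 0 < t \<longrightarrow> \<bar>s - t\<bar> \<ge> \<epsilon> * max s t \<longrightarrow>
        \<phi> ((s + t) / 2) (fst p) (snd p) + \<psi> ((s + t) / 2) (fst p) (snd p) \<le> (1 - min d1 d2) *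
          ((\<phi> s (fst p) (snd p) + \<psi> s (fst p) (snd p) + (\<phi> t (fst p) (snd p) + \<psi> t (fst p) (snd p))) / 2)"
    using A1 A2 Af Ag
  proof eventually_elim
    case (elim p)
    show ?case
    proof (intro allI impI)
      fix s t :: real assume st: "0 < s" "0 < t" "\<bar>s - t\<bar> \<ge> \<epsilon> * max s t"
      define f where "f = (\<lambda>z. \<phi> z (fst p) (snd p))"
      define g where "g = (\<lambda>z. \<psi> z (fst p) (snd p))"
      have gf: "gp f c1 c2 pm pp \<beta>" unfolding f_def by (rule conjunct2[OF elim(3)])
      have gg: "gp g c1' c2' pm' pp' \<beta>'" unfolding g_def by (rule conjunct2[OF elim(4)])
      have h1: "f ((s+t)/2) \<le> (1 - d1) * ((f s + f t)/2)" unfolding f_def using elim(1)[rule_format, OF st] by simp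
      have h2: "g ((s+t)/2) \<le> (1 - d2) * ((g s + g t)/2)" unfolding g_def using elim(2)[rule_format, OF st] by simp
      have p1: "0 < f s" "0 < f t" using gp_pos[OF gf] st by auto
      have p2: "0 < g s" "0 < g t" using gp_pos[OF gg] st by auto
      have A: "0 \<le> (f s + f t)/2" "0 \<le> (g s + g t)/2" using p1 p2 by simp_all
      have m1: "1 - d1 \<le> 1 - min d1 d2" "1 - d2 \<le> 1 - min d1 d2" by simp_all
      have i1: "(1 - d1) * ((f s + f t)/2) \<le> (1 - min d1 d2) * ((f s + f t)/2)" by (rule mult_right_mono[OF m1(1) A(1)])
      have i2: "(1 - d2) * ((g s + g t)/2) \<le> (1 - min d1 d2) * ((g s + g t)/2)" by (rule mult_right_mono[OF m1(2) A(2)])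
      have eq: "(1 - min d1 d2) * ((f s + g s + (f t + g t))/2) = (1 - min d1 d2) * ((f s + f t)/2) + (1 - min d1 d2) * ((g s + g t)/2)"
        by (simp add: distrib_left[symmetric] add_divide_distrib[symmetric] ac_simps)
      have "f ((s+t)/2) + g ((s+t)/2) \<le> (1 - min d1 d2) * ((f s + g s + (f t + g t))/2)"
        unfolding eq using h1 h2 i1 i2 by linarith
      then show "\<phi> ((s + t) / 2) (fst p) (snd p) + \<psi> ((s + t) / 2) (fst p) (snd p) \<le> (1 - min d1 d2) *
          ((\<phi> s (fst p) (snd p) + \<psi> s (fst p) (snd p) + (\<phi> t (fst p) (snd p) + \<psi> t (fst p) (snd p))) / 2)"
        unfolding f_def g_def by simp
    qed
  qed
  moreover have "0 < min d1 d2" "min d1 d2 < 1" using d1 d2 by auto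
  ultimately show "\<exists>\<delta>>0. \<delta> < 1 \<and> (AE p in lebesgue_on (\<Omega> \<times> \<Omega>). \<forall>s t. 0 < s \<longrightarrow> 0 < t \<longrightarrow> \<epsilon> * max s t \<le> \<bar>s - t\<bar> \<longrightarrow>
        \<phi> ((s + t) / 2) (fst p) (snd p) + \<psi> ((s + t) / 2) (fst p) (snd p) \<le> (1 - \<delta>) *
          ((\<phi> s (fst p) (snd p) + \<psi> s (fst p) (snd p) + (\<phi> t (fst p) (snd p) + \<psi> t (fst p) (snd p))) / 2))"
    by blast
qed

lemma C2_b:
  assumes c2: "C2 \<Omega> \<phi>"
    and Af: "AE p in lebesgue_on (\<Omega>\<times>\<Omega>). p \<in> \<Omega>\<times>\<Omega> \<and> gp (\<lambda>z. \<phi> z (fst p) (snd p)) c1 c2 pm pp \<beta>"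
    and b: "0 < c5" "\<forall>x\<in>\<Omega>. \<forall>y\<in>\<Omega>. c5 < b x y \<and> b x y < c6"
  shows "C2 \<Omega> (\<lambda>z x y. \<phi> z x y * b x y)"
  unfolding C2_def
proof (intro allI impI)
  fix \<epsilon> :: real assume e: "0 < \<epsilon>"
  obtain d1 where d1: "0 < d1" "d1 < 1" and A1: "AE p in lebesgue_on (\<Omega> \<times> \<Omega>). \<forall>s t. 0 < s \<longrightarrow> 0 < t \<longrightarrow> \<bar>s - t\<bar> \<ge> \<epsilon> * max s t \<longrightarrow>
        \<phi> ((s + t) / 2) (fst p) (snd p) \<le> (1 - d1) * ((\<phi> s (fst p) (snd p) + \<phi> t (fst p) (snd p)) / 2)"
    using C2_get[OF c2(1) e] by blast
  have "AE p in lebesgue_on (\<Omega> \<times> \<Omega>). \<forall>s t. 0 < s \<longrightarrow> 0 < t \<longrightarrow> \<bar>s - t\<bar> \<ge> \<epsilon> * max s t \<longrightarrow>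
        \<phi> ((s + t) / 2) (fst p) (snd p) * b (fst p) (snd p) \<le> (1 - d1) *
          ((\<phi> s (fst p) (snd p) * b (fst p) (snd p) + \<phi> t (fst p) (snd p) * b (fst p) (snd p)) / 2)"
    using A1 Af
  proof eventually_elim
    case (elim p)
    show ?case
    proof (intro allI impI)
      fix s t :: real assume st: "0 < s" "0 < t" "\<bar>s - t\<bar> \<ge> \<epsilon> * max s t"
      define f where "f = (\<lambda>z. \<phi> z (fst p) (snd p))"
      define k where "k = b (fst p) (snd p)"
      have pS: "fst p \<in> \<Omega>" "snd p \<in> \<Omega>" using conjunct1[OF elim(2)] by (auto simp: mem_Times_iff)
      have k: "0 < k" using b pS unfolding k_def by force
      have h1: "f ((s+t)/2) \<le> (1 - d1) * ((f s + f t)/2)" unfolding f_def using elim(1)[rule_format, OF st] by simp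
      have "f ((s+t)/2) * k \<le> ((1 - d1) * ((f s + f t)/2)) * k" using k by (intro mult_right_mono[OF h1]) simp
      also have "\<dots> = (1 - d1) * ((f s * k + f t * k)/2)" by (simp add: algebra_simps)
      finally show "\<phi> ((s + t) / 2) (fst p) (snd p) * b (fst p) (snd p) \<le> (1 - d1) *
          ((\<phi> s (fst p) (snd p) * b (fst p) (snd p) + \<phi> t (fst p) (snd p) * b (fst p) (snd p)) / 2)"
        unfolding f_def k_def by simp
    qed
  qed
  with d1 show "\<exists>\<delta>>0. \<delta> < 1 \<and> (AE p in lebesgue_on (\<Omega> \<times> \<Omega>). \<forall>s t. 0 < s \<longrightarrow> 0 < t \<longrightarrow> \<epsilon> * max s t \<le> \<bar>s - t\<bar> \<longrightarrow>
        \<phi> ((s + t) / 2) (fst p) (snd p) * b (fst p) (snd p) \<le> (1 - \<delta>) *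
          ((\<phi> s (fst p) (snd p) * b (fst p) (snd p) + \<phi> t (fst p) (snd p) * b (fst p) (snd p)) / 2))"
    by blast
qed

lemma C2_prod:
  assumes c2: "C2 \<Omega> \<phi>" "C2 \<Omega> \<psi>"
    and Af: "AE p in lebesgue_on (\<Omega>\<times>\<Omega>). p \<in> \<Omega>\<times>\<Omega> \<and> gp (\<lambda>z. \<phi> z (fst p) (snd p)) c1 c2 pm pp \<beta>"
    and Ag: "AE p in lebesgue_on (\<Omega>\<times>\<Omega>). p \<in> \<Omega>\<times>\<Omega> \<and> gp (\<lambda>z. \<psi> z (fst p) (snd p)) c1' c2' pm' pp' \<beta>'"
  shows "C2 \<Omega> (\<lambda>z x y. \<phi> z x y * \<psi> z x y)"
  unfolding C2_def
proof (intro allI impI)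
  fix \<epsilon> :: real assume e: "0 < \<epsilon>"
  obtain d1 where d1: "0 < d1" "d1 < 1" and A1: "AE p in lebesgue_on (\<Omega> \<times> \<Omega>). \<forall>s t. 0 < s \<longrightarrow> 0 < t \<longrightarrow> \<bar>s - t\<bar> \<ge> \<epsilon> * max s t \<longrightarrow>
        \<phi> ((s + t) / 2) (fst p) (snd p) \<le> (1 - d1) * ((\<phi> s (fst p) (snd p) + \<phi> t (fst p) (snd p)) / 2)"
    using C2_get[OF c2(1) e] by blast
  obtain d2 where d2: "0 < d2" "d2 < 1" and A2: "AE p in lebesgue_on (\<Omega> \<times> \<Omega>). \<forall>s t. 0 < s \<longrightarrow> 0 < t \<longrightarrow> \<bar>s - t\<bar> \<ge> \<epsilon> * max s t \<longrightarrow>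
        \<psi> ((s + t) / 2) (fst p) (snd p) \<le> (1 - d2) * ((\<psi> s (fst p) (snd p) + \<psi> t (fst p) (snd p)) / 2)"
    using C2_get[OF c2(2) e] by blast
  have "AE p in lebesgue_on (\<Omega> \<times> \<Omega>). \<forall>s t. 0 < s \<longrightarrow> 0 < t \<longrightarrow> \<bar>s - t\<bar> \<ge> \<epsilon> * max s t \<longrightarrow>
        \<phi> ((s + t) / 2) (fst p) (snd p) * \<psi> ((s + t) / 2) (fst p) (snd p) \<le> (1 - d1) *
          ((\<phi> s (fst p) (snd p) * \<psi> s (fst p) (snd p) + \<phi> t (fst p) (snd p) * \<psi> t (fst p) (snd p)) / 2)"
    using A1 A2 Af Ag
  proof eventually_elim
    case (elim p)
    show ?case
    proof (intro allI impI)
      fix s t :: real assume st: "0 < s" "0 < t" "\<bar>s - t\<bar> \<ge> \<epsilon> * max s t"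
      define f where "f = (\<lambda>z. \<phi> z (fst p) (snd p))"
      define g where "g = (\<lambda>z. \<psi> z (fst p) (snd p))"
      have gf: "gp f c1 c2 pm pp \<beta>" unfolding f_def by (rule conjunct2[OF elim(3)])
      have gg: "gp g c1' c2' pm' pp' \<beta>'" unfolding g_def by (rule conjunct2[OF elim(4)])
      have h1: "f ((s+t)/2) \<le> (1 - d1) * ((f s + f t)/2)" unfolding f_def using elim(1)[rule_format, OF st] by simp
      have h2: "g ((s+t)/2) \<le> (1 - d2) * ((g s + g t)/2)" unfolding g_def using elim(2)[rule_format, OF st] by simp
      have d: "0 \<le> d2" "d1 < 1" "d2 < 1" using d1 d2 by simp_all
      have "f ((s+t)/2) * g ((s+t)/2) \<le> (1-d1)*((f s * g s + f t * g t)/2)"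
        by (rule prod_C2_pt[OF gp_mono[OF gf] gp_mono[OF gg] gp_E(4)[OF gf] gp_E(4)[OF gg] st(1,2) h1 h2 d])
      then show "\<phi> ((s + t) / 2) (fst p) (snd p) * \<psi> ((s + t) / 2) (fst p) (snd p) \<le> (1 - d1) *
          ((\<phi> s (fst p) (snd p) * \<psi> s (fst p) (snd p) + \<phi> t (fst p) (snd p) * \<psi> t (fst p) (snd p)) / 2)"
        unfolding f_def g_def by simp
    qed
  qed
  with d1 show "\<exists>\<delta>>0. \<delta> < 1 \<and> (AE p in lebesgue_on (\<Omega> \<times> \<Omega>). \<forall>s t. 0 < s \<longrightarrow> 0 < t \<longrightarrow> \<epsilon> * max s t \<le> \<bar>s - t\<bar> \<longrightarrow>
        \<phi> ((s + t) / 2) (fst p) (snd p) * \<psi> ((s + t) / 2) (fst p) (snd p) \<le> (1 - \<delta>) *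
          ((\<phi> s (fst p) (snd p) * \<psi> s (fst p) (snd p) + \<phi> t (fst p) (snd p) * \<psi> t (fst p) (snd p)) / 2))"
    by blast
qed

lemma C2_comp:
  assumes c2: "C2 \<Omega> \<phi>" "C2 \<Omega> \<psi>" and cc: "1 < c2"
    and Af: "AE p in lebesgue_on (\<Omega>\<times>\<Omega>). p \<in> \<Omega>\<times>\<Omega> \<and> gp (\<lambda>z. \<phi> z (fst p) (snd p)) c1 c2 pm pp \<beta>"
    and Ag: "AE p in lebesgue_on (\<Omega>\<times>\<Omega>). p \<in> \<Omega>\<times>\<Omega> \<and> gp (\<lambda>z. \<psi> z (fst p) (snd p)) c1' c2' pm' pp' \<beta>'"
  shows "C2 \<Omega> (\<lambda>z x y. \<phi> (\<psi> z x y) x y)"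
  unfolding C2_def
proof (intro allI impI)
  fix \<epsilon> :: real assume e: "0 < \<epsilon>"
  obtain dg where dg: "0 < dg" "dg < 1" and Ag2: "AE p in lebesgue_on (\<Omega> \<times> \<Omega>). \<forall>s t. 0 < s \<longrightarrow> 0 < t \<longrightarrow> \<bar>s - t\<bar> \<ge> \<epsilon> * max s t \<longrightarrow>
        \<psi> ((s + t) / 2) (fst p) (snd p) \<le> (1 - dg) * ((\<psi> s (fst p) (snd p) + \<psi> t (fst p) (snd p)) / 2)"
    using C2_get[OF c2(2) e] by blast
  define lm where "lm = max (1 - dg) (3/4)"
  have lm: "3/4 \<le> lm" "lm < 1" "1 - dg \<le> lm" using dg unfolding lm_def by auto
  have e2: "0 < 2 * (1 - lm)" using lm by simp
  obtain d2 where d2: "0 < d2" "d2 < 1" and Af2: "AE p in lebesgue_on (\<Omega> \<times> \<Omega>). \<forall>s t. 0 < s \<longrightarrow> 0 < t \<longrightarrow> \<bar>s - t\<bar> \<ge> (2 * (1 - lm)) * max s t \<longrightarrow>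
        \<phi> ((s + t) / 2) (fst p) (snd p) \<le> (1 - d2) * ((\<phi> s (fst p) (snd p) + \<phi> t (fst p) (snd p)) / 2)"
    using C2_get[OF c2(1) e2] by blast
  define \<eta> where "\<eta> = 1 - (1 - d2) powr (1/c2)"
  have "(1 - d2) powr (1/c2) < 1 powr (1/c2)" using d2 cc by (intro powr_less_mono2) auto
  then have eta: "0 < \<eta>" unfolding \<eta>_def by simp
  obtain d1 where d1: "0 < d1" "d1 < 1" and Af1: "AE p in lebesgue_on (\<Omega> \<times> \<Omega>). \<forall>s t. 0 < s \<longrightarrow> 0 < t \<longrightarrow> \<bar>s - t\<bar> \<ge> \<eta> * max s t \<longrightarrow>
        \<phi> ((s + t) / 2) (fst p) (snd p) \<le> (1 - d1) * ((\<phi> s (fst p) (snd p) + \<phi> t (fst p) (snd p)) / 2)"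
    using C2_get[OF c2(1) eta] by blast
  have "AE p in lebesgue_on (\<Omega> \<times> \<Omega>). \<forall>s t. 0 < s \<longrightarrow> 0 < t \<longrightarrow> \<bar>s - t\<bar> \<ge> \<epsilon> * max s t \<longrightarrow>
        \<phi> (\<psi> ((s + t) / 2) (fst p) (snd p)) (fst p) (snd p) \<le> (1 - min d1 (d2/2)) *
          ((\<phi> (\<psi> s (fst p) (snd p)) (fst p) (snd p) + \<phi> (\<psi> t (fst p) (snd p)) (fst p) (snd p)) / 2)"
    using Ag2 Af2 Af1 Af Ag
  proof eventually_elim
    case (elim p)
    show ?case
    proof (intro allI impI)
      fix s t :: real assume st: "0 < s" "0 < t" "\<bar>s - t\<bar> \<ge> \<epsilon> * max s t"
      define f where "f = (\<lambda>z. \<phi> z (fst p) (snd p))"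
      define g where "g = (\<lambda>z. \<psi> z (fst p) (snd p))"
      have gf: "gp f c1 c2 pm pp \<beta>" unfolding f_def by (rule conjunct2[OF elim(4)])
      have gg: "gp g c1' c2' pm' pp' \<beta>'" unfolding g_def by (rule conjunct2[OF elim(5)])
      have hg: "g ((s+t)/2) \<le> (1 - dg) * ((g s + g t)/2)" unfolding g_def using elim(1)[rule_format, OF st] by simp
      have C2lam: "\<forall>s t. 0<s \<longrightarrow> 0<t \<longrightarrow> \<bar>s-t\<bar> \<ge> (2*(1-lm)) * max s t \<longrightarrow> f ((s+t)/2) \<le> (1-d2)*((f s+f t)/2)"
        unfolding f_def using elim(2) by simp
      have C2eta: "\<forall>s t. 0<s \<longrightarrow> 0<t \<longrightarrow> \<bar>s-t\<bar> \<ge> \<eta> * max s t \<longrightarrow> f ((s+t)/2) \<le> (1-d1)*((f s+f t)/2)"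
        unfolding f_def using elim(3) by simp
      define a where "a = g s"
      define b where "b = g t"
      define v where "v = g ((s+t)/2)"
      have ab: "0 < a" "0 < b" unfolding a_def b_def using gp_pos[OF gg] st by auto
      have v0: "0 < v" unfolding v_def using gp_pos[OF gg] st by auto
      have hv: "v \<le> (1 - dg) * ((a + b)/2)" using hg unfolding v_def a_def b_def .
      have S: "0 \<le> (a + b)/2" using ab by simp
      have "(1 - dg) * ((a + b)/2) \<le> 1 * ((a + b)/2)" by (rule mult_right_mono[OF _ S]) (use dg in simp)
      then have v1: "v \<le> (a + b)/2" using hv by simp
      have "(a + b)/2 \<le> max a b" by simp
      then have "(1 - dg) * ((a + b)/2) \<le> (1 - dg) * max a b" by (rule mult_left_mono) (use dg in simp)
      also have "\<dots> \<le> lm * max a b" by (rule mult_right_mono[OF lm(3)]) (use ab in simp)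
      finally have v2: "v \<le> lm * max a b" using hv by simp
      have c0: "0 < c2" using cc by simp
      have "f v \<le> (1 - min d1 (d2/2)) * ((f a + f b)/2)"
        by (rule comp_C2_pt[OF gp_mono[OF gf] gp_E(4)[OF gf] gp_growth[OF gf] c0 C2eta C2lam lm(1,2) \<eta>_def d1 d2 ab v0 v1 v2])
      then show "\<phi> (\<psi> ((s + t) / 2) (fst p) (snd p)) (fst p) (snd p) \<le> (1 - min d1 (d2/2)) *
          ((\<phi> (\<psi> s (fst p) (snd p)) (fst p) (snd p) + \<phi> (\<psi> t (fst p) (snd p)) (fst p) (snd p)) / 2)"
        unfolding f_def g_def v_def a_def b_def by simp
    qed
  qed
  moreover have "0 < min d1 (d2/2)" "min d1 (d2/2) < 1" using d1 d2 by auto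
  ultimately show "\<exists>\<delta>>0. \<delta> < 1 \<and> (AE p in lebesgue_on (\<Omega> \<times> \<Omega>). \<forall>s t. 0 < s \<longrightarrow> 0 < t \<longrightarrow> \<epsilon> * max s t \<le> \<bar>s - t\<bar> \<longrightarrow>
        \<phi> (\<psi> ((s + t) / 2) (fst p) (snd p)) (fst p) (snd p) \<le> (1 - \<delta>) *
          ((\<phi> (\<psi> s (fst p) (snd p)) (fst p) (snd p) + \<phi> (\<psi> t (fst p) (snd p)) (fst p) (snd p)) / 2))"
    by blast
qed

theorem theorem2p9:
  fixes \<Omega> :: "'a::euclidean_space set"
    and \<phi> \<psi> :: "real \<Rightarrow> 'a \<Rightarrow> 'a \<Rightarrow> real"
    and b :: "'a \<Rightarrow> 'a \<Rightarrow> real" and c5 c6 :: real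
  assumes "open \<Omega>" and "connected \<Omega>"
    and "conditions_C \<Omega> \<phi>" and "conditions_C \<Omega> \<psi>"
    and "(\<lambda>(x, y). b x y) \<in> borel_measurable (lebesgue_on (\<Omega> \<times> \<Omega>))"
    and "0 < c5" and "\<forall>x\<in>\<Omega>. \<forall>y\<in>\<Omega>. c5 < b x y \<and> b x y < c6"
  shows "conditions_C \<Omega> (\<lambda>z x y. \<phi> z x y + \<psi> z x y) \<and>
     conditions_C \<Omega> (\<lambda>z x y. \<phi> z x y * b x y) \<and>
     conditions_C \<Omega> (\<lambda>z x y. \<phi> z x y * \<psi> z x y) \<and>
     conditions_C \<Omega> (\<lambda>z x y. \<phi> (\<psi> z x y) x y)"
proof -
  note Om = assms(1) and bm = assms(5) and c5 = assms(6) and bb = assms(7)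
  obtain c1 c2 pm pp \<beta> where k: "0<c1" "1<c2" "1<pm" "pm\<le>pp" "1\<le>\<beta>"
    and Af: "AE p in lebesgue_on (\<Omega>\<times>\<Omega>). p \<in> \<Omega>\<times>\<Omega> \<and> gp (\<lambda>z. \<phi> z (fst p) (snd p)) c1 c2 pm pp \<beta>"
    using extractC[OF assms(3)] by blast
  obtain c1' c2' pm' pp' \<beta>' where k': "0<c1'" "1<c2'" "1<pm'" "pm'\<le>pp'" "1\<le>\<beta>'"
    and Ag: "AE p in lebesgue_on (\<Omega>\<times>\<Omega>). p \<in> \<Omega>\<times>\<Omega> \<and> gp (\<lambda>z. \<psi> z (fst p) (snd p)) c1' c2' pm' pp' \<beta>'"
    using extractC[OF assms(4)] by blast
  have nf: "nonneg_on \<Omega> \<phi>" and c1f: "C1 \<Omega> \<phi>" and c2f: "C2 \<Omega> \<phi>" using assms(3) unfolding conditions_C_def by auto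
  have ng: "nonneg_on \<Omega> \<psi>" and c1g: "C1 \<Omega> \<psi>" and c2g: "C2 \<Omega> \<psi>" using assms(4) unfolding conditions_C_def by auto
  have i: "conditions_C \<Omega> (\<lambda>z x y. \<phi> z x y + \<psi> z x y)"
  proof (rule buildC[OF _ C1_sum[OF c1f c1g] C2_sum[OF c2f c2g Af Ag]])
    show "nonneg_on \<Omega> (\<lambda>z x y. \<phi> z x y + \<psi> z x y)" using nf ng unfolding nonneg_on_def by (simp add: add_nonneg_nonneg)
    show "AE p in lebesgue_on (\<Omega>\<times>\<Omega>). gp (\<lambda>z. \<phi> z (fst p) (snd p) + \<psi> z (fst p) (snd p)) (c1 + c1') (max c2 c2') (min pm pm') (max pp pp') (max \<beta> \<beta>')"
      using Af Ag
    proof eventually_elim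
      case (elim p)
      show ?case using gp_sum[OF conjunct2[OF elim(1)] conjunct2[OF elim(2)]] k k' by simp
    qed
  qed (use k k' in auto)
  have ii: "conditions_C \<Omega> (\<lambda>z x y. \<phi> z x y * b x y)"
  proof (rule buildC[OF _ C1_b[OF c1f bm] C2_b[OF c2f Af c5 bb]])
    show "nonneg_on \<Omega> (\<lambda>z x y. \<phi> z x y * b x y)" using nf bb c5 unfolding nonneg_on_def
      by (metis less_trans less_imp_le mult_nonneg_nonneg)
    show "AE p in lebesgue_on (\<Omega>\<times>\<Omega>). gp (\<lambda>z. \<phi> z (fst p) (snd p) * b (fst p) (snd p)) (max (c1 * \<bar>c6\<bar>) (c1 / c5)) c2 pm pp \<beta>"
      using Af
    proof eventually_elim
      case (elim p)
      have pS: "fst p \<in> \<Omega>" "snd p \<in> \<Omega>" using conjunct1[OF elim] by (auto simp: mem_Times_iff)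
      then have kb: "c5 < b (fst p) (snd p)" "b (fst p) (snd p) < c6" using bb by auto
      show ?case using gp_b[OF conjunct2[OF elim] k(1) c5 kb] k by simp
    qed
  qed (use k c5 in \<open>auto simp: less_max_iff_disj\<close>)
  have bb1: "1 \<le> \<beta> * \<beta>'" using mult_mono[of 1 \<beta> 1 \<beta>'] k k' by simp
  have iii: "conditions_C \<Omega> (\<lambda>z x y. \<phi> z x y * \<psi> z x y)"
  proof (rule buildC[OF _ C1_prod[OF c1f c1g] C2_prod[OF c2f c2g Af Ag]])
    show "nonneg_on \<Omega> (\<lambda>z x y. \<phi> z x y * \<psi> z x y)" using nf ng unfolding nonneg_on_def by (simp add: mult_nonneg_nonneg)
    show "AE p in lebesgue_on (\<Omega>\<times>\<Omega>). gp (\<lambda>z. \<phi> z (fst p) (snd p) * \<psi> z (fst p) (snd p)) (c1 * c1') (c2 + c2') (pm + pm') (pp + pp') (\<beta> * \<beta>')"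
      using Af Ag
    proof eventually_elim
      case (elim p)
      show ?case using gp_prod[OF conjunct2[OF elim(1)] conjunct2[OF elim(2)]] k k' by simp
    qed
  qed (use k k' bb1 in \<open>auto simp: add_mono intro: less_1_mult\<close>)
  have iv: "conditions_C \<Omega> (\<lambda>z x y. \<phi> (\<psi> z x y) x y)"
  proof (rule buildC[OF _ C1_comp[OF Om c1f c1g ng Af] C2_comp[OF c2f c2g k(2) Af Ag]])
    show "nonneg_on \<Omega> (\<lambda>z x y. \<phi> (\<psi> z x y) x y)" using nf ng unfolding nonneg_on_def by simp
    show "AE p in lebesgue_on (\<Omega>\<times>\<Omega>). gp (\<lambda>z. \<phi> (\<psi> z (fst p) (snd p)) (fst p) (snd p))
       (max 1 c1 * (max 1 c1') powr c2) (c2 * c2') (pm' * pm) (pp' * pp) (\<beta> * \<beta>' powr pp)"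
      using Af Ag
    proof eventually_elim
      case (elim p)
      have c: "0 < c1" "0 < c1'" "1 \<le> \<beta>" "1 \<le> \<beta>'" "0 < c2" "0 < pm" "pm \<le> pp" using k k' by auto
      show ?case using gp_comp[OF conjunct2[OF elim(1)] conjunct2[OF elim(2)] c] by simp
    qed
    show "0 < max 1 c1 * (max 1 c1') powr c2" by simp
    show "1 < c2 * c2'" using k k' by (metis less_1_mult)
    show "1 < pm' * pm" using k k' by (metis less_1_mult)
    show "pm' * pm \<le> pp' * pp" using k k' by (intro mult_mono) auto
    show "1 \<le> \<beta> * \<beta>' powr pp"
    proof -
      have "1 \<le> \<beta>' powr pp" using k k' by (intro ge_one_powr_ge_zero) auto
      then show ?thesis using k by (metis mult_mono' one_le_mult_iff zero_le_one mult_1)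
    qed
  qed
  show ?thesis using i ii iii iv by blast
qed

end
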